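(* In the standing setup below, let $\mathsf f$ be an outer edge with $V(\mathsf f)=\{u,v\}$ and let $\mathsf C$ be an outer cycle of $\mathsf f$ of length $3$ with $V(\mathsf C)=\{u,v,w\}$. Then there exists $k\in\{1,\dots,t\}$ such that $u,v,w\in V(\mathsf T_k)$ and $u,v\in\mathrm{child}_{\mathsf T_k}(w)$.
   Context: Colored graphs: a (colored) graph is a finite set of pairs $(e,\alpha)$ with the $e$'s pairwise distinct 2-element vertex subsets $uv$ and $\alpha$ colors (repeats allowed); $V(\cdot),E(\cdot),\chi(\cdot)$ are vertex set, underlying uncolored edge set, color set; rainbow means $|\chi(\mathsf G)|=|\mathsf G|$, almost rainbow means $|\chi(\mathsf G)|=|\mathsf G|-1$; subgraphs are subsets; $\mathsf G+\mathsf e=\mathsf G\cup\{\mathsf e\}$, $\mathsf G-\mathsf e=\mathsf G\setminus\{\mathsf e\}$. Paths/cycles/trees are colored graphs whose underlying edges form a path (two distinct terminals)/cycle/tree; lengths count edges. A long rainbow odd cycle is a rainbow cycle of odd length $\ge7$. A theta graph is a union of three paths with the same terminals $s\ne t$, pairwise sharing no vertex except $s,t$ and no underlying edge; a bad piece is an almost rainbow theta graph with $\ge6$ vertices that is the union of three rainbow such paths. A partition of a graph $\mathsf G$ is a collection of graphs (parts) with union $\mathsf G$, any two sharing at most one vertex and no color. A Frankenstein graph is a graph with a partition $\{\mathsf C_1,..,\mathsf C_c,\mathsf B_1,..,\mathsf B_b,\mathsf T_1,..,\mathsf T_t\}$ ($c+b+t\ge1$) into long rainbow odd cycles $\mathsf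 C_i$, bad pieces $\mathsf B_i$ and pairwise vertex-disjoint rainbow trees $\mathsf T_i$, having no rainbow even cycle as a subgraph. For a tree $\mathsf T$ with $V(\mathsf T)\subset\mathbb Z_{>0}$, its root is $\min V(\mathsf T)$ and $\mathrm{depth}_{\mathsf T}(v)$ is the length of the path in $\mathsf T$ from the root to $v$; $\mathrm{child}_{\mathsf T}(v)=\{w\in V(\mathsf T): vw\in E(\mathsf T),\ \mathrm{depth}_{\mathsf T}(w)=\mathrm{depth}_{\mathsf T}(v)+1\}$; the total depth $\mathrm{Depth}(\mathfrak F)$ of a Frankenstein graph is $\sum_{i=1}^t\sum_{v\in V(\mathsf T_i)}\mathrm{depth}_{\mathsf T_i}(v)$. Standing setup: $n\ge1$, $m=\lfloor 6(n-1)/5\rfloor+1$, and $\mathcal D=(\mathsf D_1,\dots,\mathsf D_m)$ is a family of even cycles on $[n]=\{1,\dots,n\}$, all edges of $\mathsf D_i$ having color $i$, such that no rainbow even cycle is a subgraph of $\bigcup_i\mathsf D_i$ (a subgraph of $\mathcal D$ means a simple graph $\subseteq\bigcup_i\mathsf D_i$). Two edges are coincident if they have the same vertex pair and different colors. $\mathfrak F_*$ is a Frankenstein subgraph of $\mathcal D$ (with partition) chosen to maximize $c$, then $b$, then $|\mathfrak F_*|$, then to minimize $\mathrm{Depth}(\mathfrak F_* )$; its partition is $\{\mathsf C_1,..,\mathsf C_c,\mathsf B_1,..,\mathsf B_b,\mathsf T_1,..,\mathsf T_t\}$. Let $\Lambda=\{1,\dots,m\}\setminus\chi(\mathfrak F_*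 )$. An outer edge is an edge $\mathsf f$ of $\bigcup_{\lambda\in\Lambda}\mathsf D_\lambda$ such that no edge of $\mathfrak F_*$ is coincident to $\mathsf f$. An outer cycle of an outer edge $\mathsf f$ is a rainbow cycle of length $3$ or $5$ in $\mathfrak F_*+\mathsf f$ containing $\mathsf f$. *)

theory Defs
  imports Main
begin

type_synonym cgraph = "(nat set \<times> nat) set"

definition is_cgraph :: "cgraph \<Rightarrow> bool" where
  "is_cgraph G \<longleftrightarrow> finite G \<and> (\<forall>x\<in>G. card (fst x) = 2)
     \<and> (\<forall>x\<in>G. \<forall>y\<in>G. fst x = fst y \<longrightarrow> x = y)"

definition verts :: "cgraph \<Rightarrow> nat set" where
  "verts G = \<Union> (fst ` G)"

definition uedges :: "cgraph \<Rightarrow> nat set set" where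
  "uedges G = fst ` G"

definition colors :: "cgraph \<Rightarrow> nat set" where
  "colors G = snd ` G"

definition rainbow :: "cgraph \<Rightarrow> bool" where
  "rainbow G \<longleftrightarrow> card (colors G) = card G"

definition almost_rainbow :: "cgraph \<Rightarrow> bool" where
  "almost_rainbow G \<longleftrightarrow> card (colors G) + 1 = card G"

definition pedges :: "nat list \<Rightarrow> nat set set" where
  "pedges xs = (\<lambda>(a, b). {a, b}) ` set (zip xs (tl xs))"

definition cedges :: "nat list \<Rightarrow> nat set set" where
  "cedges xs = pedges (xs @ [hd xs])"

definition is_path :: "cgraph \<Rightarrow> nat \<Rightarrow> nat \<Rightarrow> bool" where
  "is_path P s t \<longleftrightarrow> is_cgraph P \<and> s \<noteq> t \<and>
     (\<exists>xs. distinct xs \<and> length xs \<ge> 2 \<and> hd xs = s \<and> last xs = t \<and> uedges P = pedges xs)"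

definition is_cycle :: "cgraph \<Rightarrow> bool" where
  "is_cycle C \<longleftrightarrow> is_cgraph C \<and>
     (\<exists>xs. distinct xs \<and> length xs \<ge> 3 \<and> uedges C = cedges xs)"

definition rainbow_even_cycle :: "cgraph \<Rightarrow> bool" where
  "rainbow_even_cycle C \<longleftrightarrow> is_cycle C \<and> rainbow C \<and> even (card C)"

definition long_rainbow_odd_cycle :: "cgraph \<Rightarrow> bool" where
  "long_rainbow_odd_cycle C \<longleftrightarrow> is_cycle C \<and> rainbow C \<and> odd (card C) \<and> card C \<ge> 7"

definition adj :: "cgraph \<Rightarrow> (nat \<times> nat) set" where
  "adj G = {(x, y). {x, y} \<in> uedges G}"

definition is_tree :: "cgraph \<Rightarrow> bool" where
  "is_tree T \<longleftrightarrow> is_cgraph T \<and> T \<noteq> {} \<and>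
     (\<forall>x\<in>verts T. \<forall>y\<in>verts T. (x, y) \<in> (adj T)\<^sup>*) \<and>
     \<not> (\<exists>C. C \<subseteq> T \<and> is_cycle C)"

definition is_theta :: "cgraph \<Rightarrow> cgraph \<Rightarrow> cgraph \<Rightarrow> nat \<Rightarrow> nat \<Rightarrow> bool" where
  "is_theta P1 P2 P3 s t \<longleftrightarrow> s \<noteq> t \<and> is_path P1 s t \<and> is_path P2 s t \<and> is_path P3 s t \<and>
     verts P1 \<inter> verts P2 = {s, t} \<and> verts P1 \<inter> verts P3 = {s, t} \<and> verts P2 \<inter> verts P3 = {s, t} \<and>
     uedges P1 \<inter> uedges P2 = {} \<and> uedges P1 \<inter> uedges P3 = {} \<and> uedges P2 \<inter> uedges P3 = {}"

definition bad_piece :: "cgraph \<Rightarrow> bool" where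
  "bad_piece B \<longleftrightarrow> is_cgraph B \<and> almost_rainbow B \<and> card (verts B) \<ge> 6 \<and>
     (\<exists>P1 P2 P3 s t. is_theta P1 P2 P3 s t \<and> rainbow P1 \<and> rainbow P2 \<and> rainbow P3 \<and>
        B = P1 \<union> P2 \<union> P3)"

definition is_partition :: "cgraph \<Rightarrow> cgraph list \<Rightarrow> bool" where
  "is_partition G ps \<longleftrightarrow> \<Union> (set ps) = G \<and>
     (\<forall>i<length ps. \<forall>j<length ps. i \<noteq> j \<longrightarrow>
        card (verts (ps ! i) \<inter> verts (ps ! j)) \<le> 1 \<and> colors (ps ! i) \<inter> colors (ps ! j) = {})"

definition frankenstein :: "cgraph \<Rightarrow> cgraph list \<Rightarrow> cgraph list \<Rightarrow> cgraph list \<Rightarrow> bool" where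
  "frankenstein F Cs Bs Ts \<longleftrightarrow> is_cgraph F \<and> is_partition F (Cs @ Bs @ Ts) \<and>
     length Cs + length Bs + length Ts \<ge> 1 \<and>
     (\<forall>C\<in>set Cs. long_rainbow_odd_cycle C) \<and>
     (\<forall>B\<in>set Bs. bad_piece B) \<and>
     (\<forall>T\<in>set Ts. is_tree T \<and> rainbow T) \<and>
     (\<forall>i<length Ts. \<forall>j<length Ts. i \<noteq> j \<longrightarrow> verts (Ts ! i) \<inter> verts (Ts ! j) = {}) \<and>
     \<not> (\<exists>H. H \<subseteq> F \<and> rainbow_even_cycle H)"

definition root :: "cgraph \<Rightarrow> nat" where
  "root T = Min (verts T)"

definition depth :: "cgraph \<Rightarrow> nat \<Rightarrow> nat" where
  "depth T v = (THE k. \<exists>xs. distinct xs \<and> xs \<noteq> [] \<and> hd xs = root T \<and> last xs = v \<and>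
       pedges xs \<subseteq> uedges T \<and> k = length xs - 1)"

definition child :: "cgraph \<Rightarrow> nat \<Rightarrow> nat set" where
  "child T v = {w \<in> verts T. {v, w} \<in> uedges T \<and> depth T w = depth T v + 1}"

definition total_depth :: "cgraph list \<Rightarrow> nat" where
  "total_depth Ts = (\<Sum>i<length Ts. \<Sum>v\<in>verts (Ts ! i). depth (Ts ! i) v)"

definition union_D :: "nat \<Rightarrow> (nat \<Rightarrow> cgraph) \<Rightarrow> cgraph" where
  "union_D m D = (\<Union>i\<in>{1..m}. D i)"

definition standing_setup :: "nat \<Rightarrow> nat \<Rightarrow> (nat \<Rightarrow> cgraph) \<Rightarrow> bool" where
  "standing_setup n m D \<longleftrightarrow> n \<ge> 1 \<and> m = 6 * (n - 1) div 5 + 1 \<and>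
     (\<forall>i\<in>{1..m}. is_cycle (D i) \<and> even (card (D i)) \<and> verts (D i) \<subseteq> {1..n} \<and>
        (\<forall>x\<in>D i. snd x = i)) \<and>
     \<not> (\<exists>H. is_cgraph H \<and> H \<subseteq> union_D m D \<and> rainbow_even_cycle H)"

definition better :: "nat \<times> nat \<times> nat \<times> nat \<Rightarrow> nat \<times> nat \<times> nat \<times> nat \<Rightarrow> bool" where
  "better x y \<longleftrightarrow> (case x of (c', b', s', d') \<Rightarrow> case y of (c, b, s, d) \<Rightarrow>
      c' > c \<or> (c' = c \<and> (b' > b \<or> (b' = b \<and> (s' > s \<or> (s' = s \<and> d' < d))))))"

definition params :: "cgraph \<Rightarrow> cgraph list \<Rightarrow> cgraph list \<Rightarrow> cgraph list \<Rightarrow> nat \<times> nat \<times> nat \<times> nat" where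
  "params F Cs Bs Ts = (length Cs, length Bs, card F, total_depth Ts)"

definition extremal_frankenstein ::
  "nat \<Rightarrow> (nat \<Rightarrow> cgraph) \<Rightarrow> cgraph \<Rightarrow> cgraph list \<Rightarrow> cgraph list \<Rightarrow> cgraph list \<Rightarrow> bool" where
  "extremal_frankenstein m D F Cs Bs Ts \<longleftrightarrow>
     F \<subseteq> union_D m D \<and> frankenstein F Cs Bs Ts \<and>
     (\<forall>F' Cs' Bs' Ts'. F' \<subseteq> union_D m D \<and> frankenstein F' Cs' Bs' Ts' \<longrightarrow>
        \<not> better (params F' Cs' Bs' Ts') (params F Cs Bs Ts))"

definition coincident :: "nat set \<times> nat \<Rightarrow> nat set \<times> nat \<Rightarrow> bool" where
  "coincident e f \<longleftrightarrow> fst e = fst f \<and> snd e \<noteq> snd f"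

definition outer_edge :: "nat \<Rightarrow> (nat \<Rightarrow> cgraph) \<Rightarrow> cgraph \<Rightarrow> nat set \<times> nat \<Rightarrow> bool" where
  "outer_edge m D F f \<longleftrightarrow> f \<in> (\<Union>l\<in>{1..m} - colors F. D l) \<and> \<not> (\<exists>g\<in>F. coincident g f)"

definition outer_cycle :: "cgraph \<Rightarrow> nat set \<times> nat \<Rightarrow> cgraph \<Rightarrow> bool" where
  "outer_cycle F f C \<longleftrightarrow> is_cycle C \<and> rainbow C \<and> card C \<in> {3, 5} \<and> C \<subseteq> insert f F \<and> f \<in> C"

end

theory Submission
  imports Defs
begin


lemma pedges_Nil[simp]: "pedges [] = {}" by (simp add: pedges_def)
lemma pedges_single[simp]: "pedges [x] = {}" by (simp add: pedges_def)
lemma pedges_Cons2[simp]: "pedges (x#y#zs) = insert {x,y} (pedges (y#zs))"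
  by (simp add: pedges_def)

lemma pedges_append: "pedges (xs @ y # ys) = pedges (xs @ [y]) \<union> pedges (y # ys)"
proof (induction xs)
  case Nil then show ?case by simp
next
  case (Cons a xs) then show ?case by (cases xs) auto
qed

lemma pedges_snoc: "xs \<noteq> [] \<Longrightarrow> pedges (xs @ [y]) = insert {last xs, y} (pedges xs)"
proof (induction xs)
  case Nil then show ?case by simp
next
  case (Cons a xs) then show ?case by (cases xs) auto
qed

lemma pedges_rev[simp]: "pedges (rev xs) = pedges xs"
proof (induction xs)
  case Nil then show ?case by simp
next
  case (Cons a xs)
  show ?case
  proof (cases "xs = []")
    case True then show ?thesis by simp
  next
    case False
    have "pedges (rev (a#xs)) = pedges (rev xs @ [a])" by simp
    also have "\<dots> = insert {last (rev xs), a} (pedges (rev xs))" using False by (simp add: pedges_snoc)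
    also have "\<dots> = insert {hd xs, a} (pedges xs)" using Cons False by (simp add: last_rev)
    also have "\<dots> = pedges (a#xs)" using False by (cases xs) (auto simp: insert_commute)
    finally show ?thesis .
  qed
qed

lemma pedges_sub_app1: "pedges xs \<subseteq> pedges (xs @ ys)"
proof (induction xs)
  case Nil then show ?case by simp
next
  case (Cons a xs) then show ?case by (cases xs) auto
qed

lemma pedges_sub_app2: "pedges ys \<subseteq> pedges (xs @ ys)"
proof (induction xs)
  case Nil then show ?case by simp
next
  case (Cons a xs) then show ?case by (cases "xs @ ys") auto
qed

lemma pedges_subset: "e \<in> pedges xs \<Longrightarrow> e \<subseteq> set xs"
proof (induction xs rule: induct_list012)
  case (3 x y zs) then show ?case by auto
qed auto

lemma pedges_card2: "distinct xs \<Longrightarrow> e \<in> pedges xs \<Longrightarrow> card e = 2"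
proof (induction xs rule: induct_list012)
  case (3 x y zs) then show ?case by auto
qed auto

lemma Union_pedges: "length xs \<ge> 2 \<Longrightarrow> \<Union> (pedges xs) = set xs"
proof (induction xs rule: induct_list012)
  case (3 x y zs) then show ?case by (cases zs) auto
qed auto

lemma notin_pedges: "x \<notin> set xs \<Longrightarrow> {x,y} \<notin> pedges xs"
  using pedges_subset by blast

lemma notin_pedges2: "x \<notin> set xs \<Longrightarrow> {y,x} \<notin> pedges xs"
  using pedges_subset by blast

lemma card_pedges: "distinct xs \<Longrightarrow> card (pedges xs) = length xs - 1"
proof (induction xs rule: induct_list012)
  case (3 x y zs)
  have "{x,y} \<notin> pedges (y#zs)" using 3 notin_pedges by auto
  moreover have "finite (pedges (y#zs))" by (simp add: pedges_def)
  ultimately show ?case using 3 by simp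
qed auto

lemma finite_pedges[simp]: "finite (pedges xs)" by (simp add: pedges_def)

lemma cedges_alt: "xs \<noteq> [] \<Longrightarrow> cedges xs = insert {last xs, hd xs} (pedges xs)"
  by (simp add: cedges_def pedges_snoc)

lemma hd_last_notin_pedges:
  assumes "distinct xs" "length xs \<ge> 3"
  shows "{last xs, hd xs} \<notin> pedges xs"
proof -
  have ne: "tl (tl xs) \<noteq> []" using assms(2) by (cases xs; cases "tl xs") auto
  obtain x y zs where xs: "xs = x#y#zs" and "zs \<noteq> []"
  proof
    show "xs = hd xs # hd (tl xs) # tl (tl xs)" using ne
      by (metis list.collapse list.sel(2))
  qed (rule ne)
  then have l: "last xs = last zs" "last zs \<in> set zs" by auto
  have "{last zs, x} \<noteq> {x,y}" using assms(1) xs l by (auto simp: doubleton_eq_iff)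
  moreover have "{last zs, x} \<notin> pedges (y#zs)" using assms(1) xs notin_pedges2[of x "y#zs"] by auto
  ultimately show ?thesis using xs l by simp
qed

lemma card_cedges: "distinct xs \<Longrightarrow> length xs \<ge> 3 \<Longrightarrow> card (cedges xs) = length xs"
  using hd_last_notin_pedges[of xs] card_pedges[of xs]
  by (cases xs) (auto simp: cedges_alt)

lemma pedges_of_cedges: "distinct xs \<Longrightarrow> length xs \<ge> 3 \<Longrightarrow>
   pedges xs = cedges xs - {{last xs, hd xs}}"
  using hd_last_notin_pedges[of xs] by (cases xs) (auto simp: cedges_alt)

lemma Union_cedges: "length xs \<ge> 2 \<Longrightarrow> \<Union> (cedges xs) = set xs"
  using Union_pedges[of xs] by (cases xs) (auto simp: cedges_alt)

lemma pedges_split: "{a,b} \<in> pedges xs \<Longrightarrow>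
   \<exists>p q. xs = p @ a # b # q \<or> xs = p @ b # a # q"
proof (induction xs rule: induct_list012)
  case (3 x y zs)
  show ?case
  proof (cases "{a,b} = {x,y}")
    case True then show ?thesis by (auto simp: doubleton_eq_iff intro: exI[of _ "[]"])
  next
    case False
    then have "{a,b} \<in> pedges (y#zs)" using 3 by simp
    then obtain p q where "y#zs = p @ a # b # q \<or> y#zs = p @ b # a # q" using 3 by blast
    then show ?thesis by (metis append_Cons)
  qed
qed auto

lemma cedges_rev[simp]: "cedges (rev xs) = cedges xs"
  by (cases "xs = []") (auto simp: cedges_alt hd_rev last_rev insert_commute)

lemma cedges_rotate1[simp]: "cedges (rotate1 xs) = cedges xs"
proof (cases xs)
  case Nil then show ?thesis by simp
next
  case (Cons x ys)
  show ?thesis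
  proof (cases "ys = []")
    case True then show ?thesis using Cons by simp
  next
    case False
    then show ?thesis using Cons
      by (auto simp: cedges_alt pedges_snoc insert_commute pedges_Cons2 neq_Nil_conv)
  qed
qed

lemma cedges_rotate[simp]: "cedges (rotate n xs) = cedges xs"
  by (induction n) auto

lemma cycle_orient:
  assumes "distinct xs" "{a,b} \<in> cedges xs"
  shows "\<exists>ys. distinct ys \<and> length ys = length xs \<and> cedges ys = cedges xs \<and> hd ys = a \<and> last ys = b"
proof -
  have xsne: "xs \<noteq> []" using assms by (auto simp: cedges_def)
  from assms(2) obtain p q where pq: "xs @ [hd xs] = p @ a # b # q \<or> xs @ [hd xs] = p @ b # a # q"
    unfolding cedges_def using pedges_split by blast
  show ?thesis
  proof (cases "xs @ [hd xs] = p @ a # b # q")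
    case True
    show ?thesis
    proof (cases "q = []")
      case True
      then have "xs = p @ [a]" "hd xs = b" using \<open>xs @ [hd xs] = p @ a # b # q\<close> by auto
      then have "hd (rev xs) = a" "last (rev xs) = b" by (auto simp: hd_rev last_rev)
      moreover have "cedges (rev xs) = cedges xs" by (rule cedges_rev)
      ultimately show ?thesis using assms by (intro exI[of _ "rev xs"]) simp
    next
      case False
      then have xs: "xs = (p @ [a]) @ (b # butlast q)" using \<open>xs @ [hd xs] = p @ a # b # q\<close>
        by (metis append.assoc append_Cons append_Nil butlast_append butlast_snoc list.distinct(1))
      define zs where "zs = rotate (length (p @ [a])) xs"
      have r: "zs = b # butlast q @ p @ [a]" unfolding zs_def
        by (subst xs, subst rotate_append) simp
      have d: "distinct zs" "length zs = length xs" "cedges zs = cedges xs" unfolding zs_def using assms(1) by simp_all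
      have "hd (rev zs) = a" "last (rev zs) = b" using r by (simp_all add: hd_rev last_rev)
      then show ?thesis using d by (intro exI[of _ "rev zs"]) simp
    qed
  next
    case False
    then have F: "xs @ [hd xs] = p @ b # a # q" using pq by blast
    show ?thesis
    proof (cases "q = []")
      case True
      then have "xs = p @ [b]" "hd xs = a" using F by auto
      then show ?thesis using assms by (intro exI[of _ xs]) auto
    next
      case False
      then have xs: "xs = (p @ [b]) @ (a # butlast q)" using F
        by (metis append.assoc append_Cons append_Nil butlast_append butlast_snoc list.distinct(1))
      define zs where "zs = rotate (length (p @ [b])) xs"
      have r: "zs = a # butlast q @ p @ [b]" unfolding zs_def
        by (subst xs, subst rotate_append) simp
      have d: "distinct zs" "length zs = length xs" "cedges zs = cedges xs" unfolding zs_def using assms(1) by simp_all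
      have "hd zs = a" "last zs = b" using r by simp_all
      then show ?thesis using d by (intro exI[of _ zs]) simp
    qed
  qed
qed


lemma cgraph_subset: "is_cgraph G \<Longrightarrow> H \<subseteq> G \<Longrightarrow> is_cgraph H"
  unfolding is_cgraph_def by (meson finite_subset subsetD)

lemma cgraph_finite: "is_cgraph G \<Longrightarrow> finite G" by (simp add: is_cgraph_def)

lemma cgraph_inj: "is_cgraph G \<Longrightarrow> inj_on fst G"
  unfolding is_cgraph_def inj_on_def by blast

lemma cgraph_card_uedges: "is_cgraph G \<Longrightarrow> card (uedges G) = card G"
  unfolding uedges_def using cgraph_inj card_image by blast

lemma cgraph_same: "is_cgraph G \<Longrightarrow> x \<in> G \<Longrightarrow> y \<in> G \<Longrightarrow> fst x = fst y \<Longrightarrow> x = y"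
  unfolding is_cgraph_def by blast

lemma uedges_diff: assumes "is_cgraph G" "S \<subseteq> G" shows "uedges (G - S) = uedges G - fst ` S"
proof
  show "uedges (G - S) \<subseteq> uedges G - fst ` S"
  proof
    fix e assume "e \<in> uedges (G - S)"
    then obtain g where g: "g \<in> G" "g \<notin> S" "fst g = e" by (auto simp: uedges_def)
    have "e \<notin> fst ` S"
    proof
      assume "e \<in> fst ` S"
      then obtain s where "s \<in> S" "fst s = e" by auto
      then show False using cgraph_same[OF assms(1) g(1), of s] g assms(2) by auto
    qed
    then show "e \<in> uedges G - fst ` S" using g by (auto simp: uedges_def)
  qed
next
  show "uedges G - fst ` S \<subseteq> uedges (G - S)" by (auto simp: uedges_def)
qed

lemma uedges_insert[simp]: "uedges (insert x G) = insert (fst x) (uedges G)"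
  by (simp add: uedges_def)
lemma uedges_Un[simp]: "uedges (G \<union> H) = uedges G \<union> uedges H"
  by (simp add: uedges_def image_Un)
lemma verts_Un[simp]: "verts (G \<union> H) = verts G \<union> verts H"
  by (simp add: verts_def)
lemma colors_Un[simp]: "colors (G \<union> H) = colors G \<union> colors H"
  by (simp add: colors_def image_Un)
lemma verts_uedges: "verts G = \<Union> (uedges G)" by (simp add: verts_def uedges_def)
lemma verts_mono: "H \<subseteq> G \<Longrightarrow> verts H \<subseteq> verts G" by (auto simp: verts_def)
lemma colors_mono: "H \<subseteq> G \<Longrightarrow> colors H \<subseteq> colors G" by (auto simp: colors_def)
lemma in_colors: "x \<in> G \<Longrightarrow> snd x \<in> colors G" by (auto simp: colors_def)
lemma in_uedges: "x \<in> G \<Longrightarrow> fst x \<in> uedges G" by (auto simp: uedges_def)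
lemma in_verts: "x \<in> G \<Longrightarrow> a \<in> fst x \<Longrightarrow> a \<in> verts G" by (auto simp: verts_def)
lemma uedges_E: "e \<in> uedges G \<Longrightarrow> (\<And>x. x \<in> G \<Longrightarrow> fst x = e \<Longrightarrow> P) \<Longrightarrow> P"
  by (auto simp: uedges_def)

lemma rainbow_inj: "finite G \<Longrightarrow> rainbow G \<longleftrightarrow> inj_on snd G"
  unfolding rainbow_def colors_def using inj_on_iff_eq_card by metis

definition okG :: "cgraph \<Rightarrow> bool" where
  "okG G \<longleftrightarrow> is_cgraph G \<and> (\<forall>H. H \<subseteq> G \<longrightarrow> \<not> rainbow_even_cycle H)"

lemma mk_even_contra:
  assumes "okG G" "H \<subseteq> G" "uedges H = cedges ys" "distinct ys" "length ys \<ge> 3"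
    "even (length ys)" "inj_on snd H"
  shows False
proof -
  have cg: "is_cgraph H" using assms cgraph_subset okG_def by blast
  have "is_cycle H" unfolding is_cycle_def using cg assms by blast
  moreover have "card H = length ys" using cgraph_card_uedges[OF cg] assms card_cedges by simp
  moreover have "rainbow H" using rainbow_inj cg cgraph_finite assms by blast
  ultimately show False using assms unfolding okG_def rainbow_even_cycle_def by auto
qed

lemma cycle_odd: "okG G \<Longrightarrow> Y \<subseteq> G \<Longrightarrow> is_cycle Y \<Longrightarrow> rainbow Y \<Longrightarrow> odd (card Y)"
  unfolding okG_def rainbow_even_cycle_def by blast

lemma cycle_card: "is_cycle Y \<Longrightarrow> uedges Y = cedges xs \<Longrightarrow> distinct xs \<Longrightarrow> length xs \<ge> 3 \<Longrightarrow>
   card Y = length xs"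
  using cgraph_card_uedges card_cedges is_cycle_def by metis

lemma cycle_edge_path:
  assumes "is_cycle Y" "ea \<in> Y" "fst ea = {x,y}"
  shows "\<exists>cl. distinct cl \<and> length cl = card Y \<and> length cl \<ge> 3 \<and> hd cl = x \<and> last cl = y \<and>
     pedges cl = uedges Y - {{x,y}}"
proof -
  obtain xs where xs: "distinct xs" "length xs \<ge> 3" "uedges Y = cedges xs"
    using assms(1) is_cycle_def by blast
  have "{x,y} \<in> cedges xs" using xs assms in_uedges by metis
  then obtain ys where ys: "distinct ys" "length ys = length xs" "cedges ys = cedges xs" "hd ys = x" "last ys = y"
    using cycle_orient xs(1) by blast
  have "pedges ys = cedges ys - {{last ys, hd ys}}" using pedges_of_cedges ys xs by simp
  then have "pedges ys = uedges Y - {{x,y}}" using ys xs by (simp add: insert_commute)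
  moreover have "card Y = length xs" using cycle_card assms xs by blast
  ultimately show ?thesis using ys xs by (intro exI[of _ ys]) auto
qed

lemma set_path_verts: "distinct cl \<Longrightarrow> length cl \<ge> 2 \<Longrightarrow> pedges cl \<subseteq> uedges Y \<Longrightarrow> set cl \<subseteq> verts Y"
  using Union_pedges[of cl] verts_uedges[of Y] by blast


lemma LC1:
  assumes ok: "okG G" and YG: "Y \<subseteq> G" and cy: "is_cycle Y" and rb: "rainbow Y"
    and ea: "ea \<in> Y" "fst ea = {x,y}" and z: "z \<notin> verts Y"
    and eb: "eb \<in> G" "fst eb = {y,z}" and ec: "ec \<in> G" "fst ec = {z,x}"
    and col: "snd eb \<noteq> snd ec" "snd eb \<notin> colors Y" "snd ec \<notin> colors Y"
  shows False
proof -
  have cgY: "is_cgraph Y" using cy is_cycle_def by blast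
  have odd: "odd (card Y)" using cycle_odd ok YG cy rb by blast
  obtain cl where cl: "distinct cl" "length cl = card Y" "length cl \<ge> 3" "hd cl = x" "last cl = y"
    "pedges cl = uedges Y - {{x,y}}"
    using cycle_edge_path[OF cy ea] by blast
  have "set cl \<subseteq> verts Y" using set_path_verts[of cl Y] cl by auto
  then have zcl: "z \<notin> set cl" using z by blast
  define ys where "ys = cl @ [z]"
  have d1: "distinct ys" using cl(1) zcl by (simp add: ys_def)
  have d2: "length ys = card Y + 1" using cl(2) by (simp add: ys_def)
  have d: "distinct ys" "length ys \<ge> 3" "even (length ys)" using d1 d2 odd cl(2,3) by auto
  have ce: "cedges ys = insert {z, x} (insert {y, z} (pedges cl))"
  proof -
    have cne: "cl \<noteq> []" using cl(3) by auto
    have "ys \<noteq> []" by (simp add: ys_def)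
    then have "cedges ys = insert {last ys, hd ys} (pedges ys)" by (rule cedges_alt)
    moreover have "last ys = z" "hd ys = x" using cne cl(4) by (simp_all add: ys_def)
    moreover have "pedges ys = insert {y, z} (pedges cl)" using pedges_snoc[OF cne, of z] cl(5) by (simp add: ys_def)
    ultimately show ?thesis by simp
  qed
  define H where "H = insert eb (insert ec (Y - {ea}))"
  have "uedges (Y - {ea}) = uedges Y - {{x,y}}" using uedges_diff[OF cgY, of "{ea}"] ea by simp
  then have ue: "uedges H = cedges ys" by (simp add: H_def ce cl(6) eb(2) ec(2) insert_commute)
  have HG: "H \<subseteq> G" using YG eb ec by (auto simp: H_def)
  have injY: "inj_on snd Y" using rb rainbow_inj cgY cgraph_finite by blast
  have i1: "inj_on snd (Y - {ea})" using injY by (rule inj_on_subset) auto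
  have "snd ec \<notin> snd ` (Y - {ea})" using col by (auto simp: colors_def)
  then have "snd ec \<notin> snd ` (Y - {ea} - {ec})" by blast
  then have i2: "inj_on snd (insert ec (Y - {ea}))" using i1 by (simp only: inj_on_insert) simp
  have "snd eb \<notin> snd ` (insert ec (Y - {ea}))" using col by (auto simp: colors_def)
  then have "snd eb \<notin> snd ` (insert ec (Y - {ea}) - {eb})" by blast
  then have "inj_on snd H" unfolding H_def using i2 by (simp only: inj_on_insert) simp
  then show False using mk_even_contra[OF ok HG ue d] by blast
qed


lemma LC2:
  assumes ok: "okG G" and YG: "Y \<subseteq> G" and cy: "is_cycle Y" and rb: "rainbow Y"
    and e1: "e1 \<in> Y" "fst e1 = {u,w}" and e2: "e2 \<in> Y" "fst e2 = {w,v}"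
    and f: "f \<in> G" "fst f = {u,v}" "snd f \<notin> colors Y" "{u,v} \<notin> uedges Y" and uv: "u \<noteq> v"
  shows False
proof -
  have cgY: "is_cgraph Y" using cy is_cycle_def by blast
  have odd: "odd (card Y)" using cycle_odd ok YG cy rb by blast
  obtain cl where cl: "distinct cl" "length cl = card Y" "length cl \<ge> 3" "hd cl = u" "last cl = w"
    "pedges cl = uedges Y - {{u,w}}"
    using cycle_edge_path[OF cy e1] by blast
  have "{w,v} \<noteq> {u,w}" using uv by (auto simp: doubleton_eq_iff)
  moreover have "{w,v} \<in> uedges Y" using in_uedges[OF e2(1)] e2(2) by simp
  ultimately have "{w,v} \<in> pedges cl" by (simp add: cl(6))
  then obtain p q where pq: "cl = p @ w # v # q \<or> cl = p @ v # w # q" using pedges_split by blast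
  have "card (fst e2) = 2" using e2 cgY is_cgraph_def by blast
  then have vw: "v \<noteq> w" using e2 by auto
  have "cl = p @ [v, w]"
  proof (cases "cl = p @ w # v # q")
    case True
    then have "last cl \<noteq> w"
      using cl(1) vw by (cases q) auto
    then show ?thesis using cl(5) by blast
  next
    case False
    then have c: "cl = p @ v # w # q" using pq by blast
    have "q = []" using c cl(1,5) by (cases q rule: rev_cases) auto
    then show ?thesis using c by simp
  qed
  then have clp: "cl = p @ [v, w]" .
  have pne: "p \<noteq> []" using clp cl(4) uv by auto
  have "length cl \<noteq> 3"
  proof
    assume "length cl = 3"
    then have "p = [u]" using clp pne cl(4) by (cases p) auto
    then have "{u,v} \<in> pedges cl" using clp by simp
    then show False using cl(6) f(4) by auto
  qed
  then have l5: "length cl \<ge> 5" using cl(2,3) odd by presburger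
  define ys where "ys = p @ [v]"
  have d1: "distinct ys" using cl(1) clp by (simp add: ys_def)
  have d2: "length ys + 1 = card Y" using cl(2) clp by (simp add: ys_def)
  have d3: "even (length ys)" using d2 odd by presburger
  have d: "distinct ys" "length ys \<ge> 3" "even (length ys)" using d1 d2 d3 l5 cl(2) by auto
  have ce: "cedges ys = insert {v, u} (pedges ys)"
  proof -
    have "hd ys = u" using pne cl(4) clp by (simp add: ys_def)
    then show ?thesis by (simp add: ys_def cedges_alt)
  qed
  have "pedges cl = insert {v,w} (pedges ys)"
    using clp pedges_snoc[of "p @ [v]" w] by (simp add: ys_def)
  moreover have "w \<notin> set ys" using cl(1) clp by (auto simp: ys_def)
  ultimately have pys: "pedges ys = uedges Y - {{u,w}} - {{v,w}}" using cl(6) notin_pedges2[of w ys v] by blast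
  define H where "H = insert f (Y - {e1, e2})"
  have "uedges (Y - {e1,e2}) = uedges Y - {{u,w},{w,v}}" using uedges_diff[OF cgY, of "{e1,e2}"] e1 e2 by simp
  then have ue: "uedges H = cedges ys" by (simp add: H_def ce pys f(2) insert_commute Diff_insert2[symmetric])
  have HG: "H \<subseteq> G" using YG f by (auto simp: H_def)
  have injY: "inj_on snd Y" using rb rainbow_inj cgY cgraph_finite by blast
  have i1: "inj_on snd (Y - {e1,e2})" using injY by (rule inj_on_subset) auto
  have "snd f \<notin> snd ` (Y - {e1,e2})" using f by (auto simp: colors_def)
  then have "snd f \<notin> snd ` (Y - {e1,e2} - {f})" by blast
  then have "inj_on snd H" unfolding H_def using i1 by (simp only: inj_on_insert) simp
  then show False using mk_even_contra[OF ok HG ue d] by blast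
qed


lemma path_list: assumes "is_path P s t"
  shows "\<exists>xs. distinct xs \<and> length xs \<ge> 2 \<and> hd xs = s \<and> last xs = t \<and> uedges P = pedges xs \<and> verts P = set xs"
proof -
  obtain xs where xs: "distinct xs" "length xs \<ge> 2" "hd xs = s" "last xs = t" "uedges P = pedges xs"
    using assms is_path_def by blast
  then have "verts P = set xs" using Union_pedges verts_uedges by metis
  then show ?thesis using xs by blast
qed

lemma list2_split: assumes "length xs \<ge> 2" obtains mid where "xs = hd xs # mid @ [last xs]"
proof -
  obtain a r where xr0: "xs = a # r" using assms by (cases xs) auto
  have xr: "xs = a # r" "r \<noteq> []" using xr0 assms by auto
  then obtain r' b where "r = r' @ [b]" by (cases r rule: rev_cases) auto
  then show ?thesis using that xr by simp
qed

lemma th_perm12: "is_theta P Q R s t \<Longrightarrow> is_theta Q P R s t"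
  unfolding is_theta_def by (auto simp: Int_commute)
lemma th_perm23: "is_theta P Q R s t \<Longrightarrow> is_theta P R Q s t"
  unfolding is_theta_def by (auto simp: Int_commute)

lemma th_disj: assumes "is_theta P Q R s t" shows "P \<inter> Q = {}" "P \<inter> R = {}" "Q \<inter> R = {}"
proof -
  have "uedges P \<inter> uedges Q = {}" "uedges P \<inter> uedges R = {}" "uedges Q \<inter> uedges R = {}"
    using assms unfolding is_theta_def by blast+
  then show "P \<inter> Q = {}" "P \<inter> R = {}" "Q \<inter> R = {}" using in_uedges by blast+
qed

lemma th_vert: assumes "is_theta P Q R s t" shows "verts P \<inter> verts Q = {s,t}" "verts P \<inter> verts R = {s,t}" "verts Q \<inter> verts R = {s,t}"
  using assms unfolding is_theta_def by auto

lemma th_cycle: assumes th: "is_theta P Q R s t" and cg: "is_cgraph (P \<union> Q)"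
  shows "is_cycle (P \<union> Q)"
proof -
  have pP: "is_path P s t" and pQ: "is_path Q s t" and st: "s \<noteq> t" using th is_theta_def by auto
  obtain xp where xp: "distinct xp" "length xp \<ge> 2" "hd xp = s" "last xp = t" "uedges P = pedges xp" "verts P = set xp"
    using path_list[OF pP] by blast
  obtain xq where xq: "distinct xq" "length xq \<ge> 2" "hd xq = s" "last xq = t" "uedges Q = pedges xq" "verts Q = set xq"
    using path_list[OF pQ] by blast
  obtain mid where mid: "xq = s # mid @ [t]" using list2_split[OF xq(2)] xq by metis
  obtain mp where mp: "xp = s # mp @ [t]" using list2_split[OF xp(2)] xp by metis
  have vi: "verts P \<inter> verts Q = {s,t}" using th_vert[OF th] by blast
  have dm: "set mid \<inter> set xp = {}"
  proof -
    have "set mid \<subseteq> set xq - {s,t}" using xq(1) mid by auto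
    then show ?thesis using vi xp(6) xq(6) by blast
  qed
  define cl where "cl = xp @ rev mid"
  have dcl: "distinct cl" using xp(1) xq(1) mid dm by (auto simp: cl_def)
  have "cl @ [hd cl] = (s # mp) @ t # (rev mid @ [s])" using mp by (simp add: cl_def)
  then have "cedges cl = pedges ((s # mp) @ [t]) \<union> pedges (t # rev mid @ [s])"
    unfolding cedges_def using pedges_append by metis
  also have "\<dots> = pedges xp \<union> pedges xq"
  proof -
    have "t # rev mid @ [s] = rev xq" using mid by simp
    then show ?thesis using mp by simp
  qed
  finally have ce: "cedges cl = uedges (P \<union> Q)" using xp(5) xq(5) by simp
  have "length cl \<ge> 3"
  proof (rule ccontr)
    assume "\<not> 3 \<le> length cl"
    moreover have "length cl = length mp + length mid + 2" by (simp add: cl_def mp)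
    ultimately have "length mp + length mid = 0" by linarith
    then have "mid = []" "mp = []" by simp_all
    then have "pedges xp = {{s,t}}" "pedges xq = {{s,t}}" using mp mid by auto
    then show False using th xp(5) xq(5) unfolding is_theta_def by auto
  qed
  then show ?thesis using cg dcl ce is_cycle_def by metis
qed

lemma path_single: assumes "is_path P s t" "e \<in> P" "fst e = {s,t}" shows "P = {e}"
proof -
  obtain xs where xs: "distinct xs" "length xs \<ge> 2" "hd xs = s" "last xs = t" "uedges P = pedges xs"
    using assms is_path_def by blast
  have st: "s \<noteq> t" using assms is_path_def by blast
  have "{s,t} \<in> pedges xs" using assms xs in_uedges by metis
  then obtain p q where pq: "xs = p @ s # t # q \<or> xs = p @ t # s # q" using pedges_split by blast
  have "xs = [s,t]"
  proof (cases "xs = p @ s # t # q")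
    case True
    have "p = []" using True xs(1,3) by (cases p) auto
    moreover have "q = []" using True xs(1,4) by (cases q rule: rev_cases) auto
    ultimately show ?thesis using True by simp
  next
    case False
    then have X: "xs = p @ t # s # q" using pq by blast
    show ?thesis using X xs(1,3) st by (cases p) auto
  qed
  then have "uedges P = {{s,t}}" using xs by simp
  moreover have cg: "is_cgraph P" using assms is_path_def by blast
  ultimately have "\<And>g. g \<in> P \<Longrightarrow> g = e"
    using assms(2,3) cgraph_same[OF cg] in_uedges by (metis singletonD)
  then show ?thesis using assms(2) by blast
qed

lemma non_rainbow_pair: "finite X \<Longrightarrow> \<not> rainbow X \<Longrightarrow> \<exists>a\<in>X. \<exists>b\<in>X. a \<noteq> b \<and> snd a = snd b"
  using rainbow_inj unfolding inj_on_def by blast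

lemma coll_unique:
  assumes fin: "finite B" and ar: "almost_rainbow B" and g: "g \<in> B" "h \<in> B" "g \<noteq> h" "snd g = snd h"
    and g': "g' \<in> B" "h' \<in> B" "g' \<noteq> h'" "snd g' = snd h'"
  shows "{g',h'} = {g,h}"
proof -
  have key: "inj_on snd (B - {x})" if "x \<in> B" "y \<in> B" "x \<noteq> y" "snd x = snd y" for x y
  proof -
    have "snd ` (B - {x}) = snd ` B"
    proof
      show "snd ` B \<subseteq> snd ` (B - {x})"
      proof
        fix c assume "c \<in> snd ` B"
        then obtain b where b: "b \<in> B" "c = snd b" by blast
        show "c \<in> snd ` (B - {x})"
        proof (cases "b = x")
          case True then show ?thesis using that b by (metis DiffI image_eqI singletonD)
        next
          case False then show ?thesis using b by blast
        qed
      qed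
    qed auto
    moreover have "card (B - {x}) = card B - 1" using that fin by simp
    ultimately have "card (snd ` (B - {x})) = card (B - {x})" using ar by (simp add: almost_rainbow_def colors_def)
    then show ?thesis using inj_on_iff_eq_card fin by blast
  qed
  have "g \<in> {g',h'}"
  proof (rule ccontr)
    assume "g \<notin> {g',h'}"
    then have "g' \<in> B - {g}" "h' \<in> B - {g}" using g' by auto
    then show False using key[OF g] g' unfolding inj_on_def by blast
  qed
  moreover have "h \<in> {g',h'}"
  proof (rule ccontr)
    assume "h \<notin> {g',h'}"
    then have "g' \<in> B - {h}" "h' \<in> B - {h}" using g' by auto
    then show False using key[of h g] g g' unfolding inj_on_def by (metis (no_types, lifting))
  qed
  ultimately show ?thesis using g by auto
qed

definition bp :: "cgraph \<Rightarrow> cgraph \<Rightarrow> cgraph \<Rightarrow> nat \<Rightarrow> nat \<Rightarrow> cgraph \<Rightarrow> bool" where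
  "bp P Q R s t B \<longleftrightarrow> is_theta P Q R s t \<and> rainbow P \<and> rainbow Q \<and> rainbow R \<and> B = P \<union> Q \<union> R \<and>
     is_cgraph B \<and> almost_rainbow B"

lemma bp_perm12: "bp P Q R s t B \<Longrightarrow> bp Q P R s t B"
  unfolding bp_def using th_perm12 by (auto simp: Un_ac)
lemma bp_perm23: "bp P Q R s t B \<Longrightarrow> bp P R Q s t B"
  unfolding bp_def using th_perm23 by (auto simp: Un_ac)

lemma bad_piece_bp: "bad_piece B \<Longrightarrow> \<exists>P Q R s t. bp P Q R s t B"
  unfolding bad_piece_def bp_def by blast

lemma bp_facts: assumes "bp P Q R s t B"
  shows "finite P" "finite Q" "finite R" "finite B" "P \<subseteq> B" "Q \<subseteq> B" "R \<subseteq> B"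
    "inj_on snd P" "inj_on snd Q" "inj_on snd R" "is_cgraph B" "is_theta P Q R s t" "almost_rainbow B"
  using assms unfolding bp_def is_cgraph_def by (auto simp: rainbow_inj finite_subset)

lemma at_most_one:
  assumes bp: "bp P Q R s t B" and nr: "\<not> rainbow (P \<union> Q)"
  shows "rainbow (P \<union> R) \<and> rainbow (Q \<union> R)"
proof -
  note F = bp_facts[OF bp]
  have d: "P \<inter> Q = {}" "P \<inter> R = {}" "Q \<inter> R = {}" using th_disj F(12) by auto
  obtain a b where ab: "a \<in> P \<union> Q" "b \<in> P \<union> Q" "a \<noteq> b" "snd a = snd b"
    using non_rainbow_pair[OF _ nr] F by blast
  have aB: "a \<in> B" "b \<in> B" using ab F by auto
  have 1: "rainbow (P \<union> R)"
  proof (rule ccontr)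
    assume "\<not> rainbow (P \<union> R)"
    then obtain c d' where cd: "c \<in> P \<union> R" "d' \<in> P \<union> R" "c \<noteq> d'" "snd c = snd d'"
      using non_rainbow_pair F by blast
    have "{c,d'} = {a,b}" using coll_unique[OF F(4) F(13) aB ab(3,4)] cd F by blast
    then have "a \<in> P" "b \<in> P" using cd ab d by auto
    then show False using F(8) ab unfolding inj_on_def by blast
  qed
  have 2: "rainbow (Q \<union> R)"
  proof (rule ccontr)
    assume "\<not> rainbow (Q \<union> R)"
    then obtain c d' where cd: "c \<in> Q \<union> R" "d' \<in> Q \<union> R" "c \<noteq> d'" "snd c = snd d'"
      using non_rainbow_pair F by blast
    have "{c,d'} = {a,b}" using coll_unique[OF F(4) F(13) aB ab(3,4)] cd F by blast
    then have "a \<in> Q" "b \<in> Q" using cd ab d by auto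
    then show False using F(9) ab unfolding inj_on_def by blast
  qed
  show ?thesis using 1 2 by blast
qed

lemma bp_cycle: assumes bp: "bp P Q R s t B" shows "is_cycle (P \<union> Q)"
proof -
  have "P \<union> Q \<subseteq> B" using bp_facts(5,6)[OF bp] by blast
  then have "is_cgraph (P \<union> Q)" using cgraph_subset bp_facts(11)[OF bp] by blast
  then show ?thesis using th_cycle bp_facts(12)[OF bp] by blast
qed

lemma BP_one: assumes bp: "bp P Q R s t B" and e: "e \<in> P"
  shows "\<exists>Y \<subseteq> B. is_cycle Y \<and> rainbow Y \<and> e \<in> Y"
proof (cases "rainbow (P \<union> Q)")
  case True
  have "P \<union> Q \<subseteq> B" using bp_facts(5,6)[OF bp] by blast
  then show ?thesis using bp_cycle[OF bp] e True by (intro exI[of _ "P \<union> Q"]) simp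
next
  case False
  then have r: "rainbow (P \<union> R)" using at_most_one[OF bp] by blast
  have "P \<union> R \<subseteq> B" using bp_facts(5,7)[OF bp] by blast
  then show ?thesis using bp_cycle[OF bp_perm23[OF bp]] e r by (intro exI[of _ "P \<union> R"]) simp
qed

lemma BP_one_any: assumes bp: "bp P Q R s t B" and e: "e \<in> B"
  shows "\<exists>Y \<subseteq> B. is_cycle Y \<and> rainbow Y \<and> e \<in> Y"
proof -
  have "e \<in> P \<or> e \<in> Q \<or> e \<in> R" using e bp unfolding bp_def by blast
  moreover have b2: "bp Q P R s t B" using bp bp_perm12 by blast
  moreover have b3: "bp R P Q s t B" using bp_perm12[OF bp_perm23[OF bp]] .
  ultimately show ?thesis using BP_one[OF bp] BP_one[OF b2] BP_one[OF b3] by blast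
qed


lemma uedges_mono: "H \<subseteq> G \<Longrightarrow> uedges H \<subseteq> uedges G" by (auto simp: uedges_def)

lemma BP_same:
  assumes ok: "okG G" and BG: "B \<subseteq> G" and bp: "bp P Q R s t B"
    and e1: "e1 \<in> P" "fst e1 = {u,w}" and e2: "e2 \<in> P" "fst e2 = {w,v}"
    and f: "f \<in> G" "fst f = {u,v}" "snd f \<notin> colors B" "{u,v} \<notin> uedges B" and uv: "u \<noteq> v"
  shows False
proof -
  obtain Y where Y: "Y \<subseteq> B" "is_cycle Y" "rainbow Y" "P \<subseteq> Y"
  proof (cases "rainbow (P \<union> Q)")
    case True
    have "P \<union> Q \<subseteq> B" using bp_facts(5,6)[OF bp] by blast
    then show ?thesis using that[of "P \<union> Q"] bp_cycle[OF bp] True by blast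
  next
    case False
    then have r: "rainbow (P \<union> R)" using at_most_one[OF bp] by blast
    have "P \<union> R \<subseteq> B" using bp_facts(5,7)[OF bp] by blast
    then show ?thesis using that[of "P \<union> R"] bp_cycle[OF bp_perm23[OF bp]] r by blast
  qed
  have YG: "Y \<subseteq> G" using Y BG by blast
  have "snd f \<notin> colors Y" using f colors_mono[OF Y(1)] by blast
  moreover have "{u,v} \<notin> uedges Y" using f uedges_mono[OF Y(1)] by blast
  ultimately show False using LC2[OF ok YG Y(2) Y(3) _ e1(2) _ e2(2) f(1,2) _ _ uv] e1 e2 Y(4) by blast
qed

lemma BP_diff:
  assumes ok: "okG G" and BG: "B \<subseteq> G" and bp: "bp P Q R s t B"
    and e1: "e1 \<in> P" "fst e1 = {u,w}" and e2: "e2 \<in> Q" "fst e2 = {w,v}"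
    and f: "f \<in> G" "fst f = {u,v}" "snd f \<notin> colors B" "{u,v} \<notin> uedges B"
    and dist: "u \<noteq> v" "u \<noteq> w" "v \<noteq> w" and c12: "snd e1 \<noteq> snd e2"
  shows False
proof (cases "rainbow (P \<union> Q)")
  case True
  have PQ: "P \<union> Q \<subseteq> B" using bp_facts(5,6)[OF bp] by blast
  then have YG: "P \<union> Q \<subseteq> G" using BG by blast
  have "snd f \<notin> colors (P \<union> Q)" using f colors_mono[OF PQ] by blast
  moreover have "{u,v} \<notin> uedges (P \<union> Q)" using f uedges_mono[OF PQ] by blast
  moreover have "e1 \<in> P \<union> Q" "e2 \<in> P \<union> Q" using e1 e2 by auto
  ultimately show False using LC2[OF ok YG bp_cycle[OF bp] True _ e1(2) _ e2(2) f(1,2) _ _ dist(1)] by blast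
next
  case False
  have rPR: "rainbow (P \<union> R)" and rQR: "rainbow (Q \<union> R)" using at_most_one[OF bp False] by auto
  note F = bp_facts[OF bp]
  have d: "P \<inter> Q = {}" "P \<inter> R = {}" "Q \<inter> R = {}" using th_disj F(12) by auto
  have vi: "verts P \<inter> verts Q = {s,t}" "verts P \<inter> verts R = {s,t}" "verts Q \<inter> verts R = {s,t}"
    using th_vert F(12) by auto
  have pP: "is_path P s t" and pQ: "is_path Q s t" using F(12) is_theta_def by auto
  have wP: "w \<in> verts P" using in_verts[OF e1(1)] e1(2) by auto
  have uP: "u \<in> verts P" using in_verts[OF e1(1)] e1(2) by auto
  have wQ: "w \<in> verts Q" using in_verts[OF e2(1)] e2(2) by auto
  have vQ: "v \<in> verts Q" using in_verts[OF e2(1)] e2(2) by auto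
  have wst: "w \<in> {s,t}" using wP wQ vi(1) by blast
  have PRB: "P \<union> R \<subseteq> B" using F(5,7) by blast
  have QRB: "Q \<union> R \<subseteq> B" using F(6,7) by blast
  have cPR: "is_cycle (P \<union> R)" using bp_cycle[OF bp_perm23[OF bp]] .
  have cQR: "is_cycle (Q \<union> R)" using bp_cycle[OF bp_perm23[OF bp_perm12[OF bp]]] .
  have e1B: "e1 \<in> B" and e2B: "e2 \<in> B" using e1 e2 F(5,6) by auto
  have sfe1: "snd f \<noteq> snd e1" using f(3) in_colors[OF e1B] by metis
  have sfe2: "snd f \<noteq> snd e2" using f(3) in_colors[OF e2B] by metis
  have noA: "\<not> (v \<notin> {s,t} \<and> snd e2 \<notin> colors (P \<union> R))"
  proof
    assume A: "v \<notin> {s,t} \<and> snd e2 \<notin> colors (P \<union> R)"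
    have "v \<notin> verts P" "v \<notin> verts R" using A vQ vi by blast+
    then have vY: "v \<notin> verts (P \<union> R)" by simp
    have "snd f \<notin> colors (P \<union> R)" using f colors_mono[OF PRB] by blast
    moreover have "fst f = {v,u}" using f(2) by (simp add: insert_commute)
    moreover have "e1 \<in> P \<union> R" using e1 by simp
    ultimately show False
      using LC1[OF ok _ cPR rPR _ e1(2) vY _ e2(2) f(1) _ sfe2[symmetric]] PRB BG A e2B BG by blast
  qed
  have noB: "\<not> (u \<notin> {s,t} \<and> snd e1 \<notin> colors (Q \<union> R))"
  proof
    assume B: "u \<notin> {s,t} \<and> snd e1 \<notin> colors (Q \<union> R)"
    have "u \<notin> verts Q" "u \<notin> verts R" using B uP vi by blast+
    then have uY: "u \<notin> verts (Q \<union> R)" by simp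
    have "snd f \<notin> colors (Q \<union> R)" using f colors_mono[OF QRB] by blast
    moreover have "fst f = {v,u}" using f(2) by (simp add: insert_commute)
    moreover have "fst e1 = {u,w}" using e1(2) .
    moreover have "e2 \<in> Q \<union> R" using e2 by simp
    ultimately show False
      using LC1[OF ok _ cQR rQR _ e2(2) uY f(1) _ e1B[THEN subsetD[OF BG]] _ sfe1] QRB BG B by blast
  qed
  have sQ: "Q = {e2}" if "v \<in> {s,t}"
  proof -
    have "fst e2 = {s,t}" using that wst dist e2(2) by auto
    then show ?thesis using path_single[OF pQ e2(1)] by blast
  qed
  have sP: "P = {e1}" if "u \<in> {s,t}"
  proof -
    have "fst e1 = {s,t}" using that wst dist e1(2) by auto
    then show ?thesis using path_single[OF pP e1(1)] by blast
  qed
  have injPR: "inj_on snd (P \<union> R)" using rPR rainbow_inj F(1,3) by blast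
  have injQR: "inj_on snd (Q \<union> R)" using rQR rainbow_inj F(2,3) by blast
  show False
  proof (cases "v \<in> {s,t}")
    case vst: True
    show False
    proof (cases "u \<in> {s,t}")
      case True then show False using vst wst dist by auto
    next
      case False
      then have "snd e1 \<in> colors (Q \<union> R)" using noB by blast
      then obtain g where g: "g \<in> Q \<union> R" "snd g = snd e1" unfolding colors_def by (metis imageE)
      show False
      proof (cases "g \<in> Q")
        case True then show False using sQ[OF vst] g c12 by auto
      next
        case False
        then have "g \<in> R" using g by blast
        then have "g \<noteq> e1" "g \<in> P \<union> R" "e1 \<in> P \<union> R" using d e1(1) by auto
        then show False using injPR g(2) unfolding inj_on_def by blast
      qed
    qed
  next
    case vst: False
    then have c2: "snd e2 \<in> colors (P \<union> R)" using noA by blast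
    then obtain g where g: "g \<in> P \<union> R" "snd g = snd e2" unfolding colors_def by (metis imageE)
    show False
    proof (cases "u \<in> {s,t}")
      case True
      show False
      proof (cases "g \<in> P")
        case True then show False using sP[OF \<open>u \<in> {s,t}\<close>] g c12 by auto
      next
        case False
        then have "g \<in> R" using g by blast
        then have "g \<noteq> e2" "g \<in> Q \<union> R" "e2 \<in> Q \<union> R" using d e2(1) by auto
        then show False using injQR g(2) unfolding inj_on_def by blast
      qed
    next
      case False
      then have "snd e1 \<in> colors (Q \<union> R)" using noB by blast
      then obtain h where h: "h \<in> Q \<union> R" "snd h = snd e1" unfolding colors_def by (metis imageE)
      have gne: "g \<noteq> e2" using g(1) e2(1) d by auto
      have hne: "h \<noteq> e1" using h(1) e1(1) d by auto
      have gB: "g \<in> B" using g(1) PRB by blast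
      have hB: "h \<in> B" using h(1) QRB by blast
      have "{h, e1} = {g, e2}" using coll_unique[OF F(4) F(13) gB e2B gne g(2) hB e1B hne h(2)] .
      moreover have "e1 \<noteq> e2" using e1(1) e2(1) d by auto
      ultimately have "e1 = g" by (auto simp: doubleton_eq_iff)
      then show False using g(2) c12 by simp
    qed
  qed
qed

lemma NT_one:
  assumes ok: "okG G" and XG: "X \<subseteq> G" and X: "long_rainbow_odd_cycle X \<or> bad_piece X"
    and ea: "ea \<in> X" "fst ea = {x,y}" and z: "z \<notin> verts X"
    and eb: "eb \<in> G" "fst eb = {y,z}" and ec: "ec \<in> G" "fst ec = {z,x}"
    and col: "snd eb \<noteq> snd ec" "snd eb \<notin> colors X" "snd ec \<notin> colors X"
  shows False
proof (cases "long_rainbow_odd_cycle X")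
  case True
  then have "is_cycle X" "rainbow X" using long_rainbow_odd_cycle_def by auto
  then show False using LC1[OF ok XG _ _ ea z eb ec col] by blast
next
  case False
  then obtain P Q R s t where bp: "bp P Q R s t X" using X bad_piece_bp by blast
  obtain Y where Y: "Y \<subseteq> X" "is_cycle Y" "rainbow Y" "ea \<in> Y" using BP_one_any[OF bp ea(1)] by blast
  have "Y \<subseteq> G" using Y XG by blast
  moreover have "z \<notin> verts Y" using z verts_mono[OF Y(1)] by blast
  moreover have "snd eb \<notin> colors Y" "snd ec \<notin> colors Y" using col colors_mono[OF Y(1)] by blast+
  ultimately show False using LC1[OF ok _ Y(2) Y(3) Y(4) ea(2) _ eb ec col(1)] by blast
qed

lemma NT_two:
  assumes ok: "okG G" and XG: "X \<subseteq> G" and X: "long_rainbow_odd_cycle X \<or> bad_piece X"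
    and e1: "e1 \<in> X" "fst e1 = {u,w}" and e2: "e2 \<in> X" "fst e2 = {w,v}"
    and f: "f \<in> G" "fst f = {u,v}" "snd f \<notin> colors X" "{u,v} \<notin> uedges X"
    and dist: "u \<noteq> v" "u \<noteq> w" "v \<noteq> w" and c12: "snd e1 \<noteq> snd e2"
  shows False
proof (cases "long_rainbow_odd_cycle X")
  case True
  then have "is_cycle X" "rainbow X" using long_rainbow_odd_cycle_def by auto
  then show False using LC2[OF ok XG _ _ e1 e2 f dist(1)] by blast
next
  case False
  then obtain P Q R s t where b123: "bp P Q R s t X" using X bad_piece_bp by blast
  have b213: "bp Q P R s t X" using bp_perm12[OF b123] .
  have b132: "bp P R Q s t X" using bp_perm23[OF b123] .
  have b312: "bp R P Q s t X" using bp_perm12[OF b132] .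
  have b231: "bp Q R P s t X" using bp_perm23[OF b213] .
  have b321: "bp R Q P s t X" using bp_perm23[OF b312] .
  have S: "\<And>P' Q' R'. bp P' Q' R' s t X \<Longrightarrow> e1 \<in> P' \<Longrightarrow> e2 \<in> P' \<Longrightarrow> False"
    using BP_same[OF ok XG _ _ e1(2) _ e2(2) f dist(1)] by blast
  have H: "\<And>P' Q' R'. bp P' Q' R' s t X \<Longrightarrow> e1 \<in> P' \<Longrightarrow> e2 \<in> Q' \<Longrightarrow> False"
    using BP_diff[OF ok XG _ _ e1(2) _ e2(2) f dist c12] by blast
  have "X = P \<union> Q \<union> R" using b123 bp_def by blast
  then have o1: "e1 \<in> P \<or> e1 \<in> Q \<or> e1 \<in> R" and o2: "e2 \<in> P \<or> e2 \<in> Q \<or> e2 \<in> R" using e1 e2 by auto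
  show False
  proof -
    { assume "e1 \<in> P"
      then have False using o2 S[OF b123] H[OF b123] H[OF b132] by blast }
    moreover
    { assume "e1 \<in> Q"
      then have False using o2 S[OF b213] H[OF b213] H[OF b231] by blast }
    moreover
    { assume "e1 \<in> R"
      then have False using o2 S[OF b312] H[OF b312] H[OF b321] by blast }
    ultimately show False using o1 by blast
  qed
qed


definition tpath :: "cgraph \<Rightarrow> nat list \<Rightarrow> bool" where
  "tpath T xs \<longleftrightarrow> distinct xs \<and> xs \<noteq> [] \<and> pedges xs \<subseteq> uedges T"

lemma mk_cycle:
  assumes cg: "is_cgraph G" and d: "distinct ys" "length ys \<ge> 3" and s: "cedges ys \<subseteq> uedges G"
  shows "\<exists>C \<subseteq> G. is_cycle C"
proof -
  define C where "C = {x \<in> G. fst x \<in> cedges ys}"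
  have ue: "uedges C = cedges ys"
  proof
    show "uedges C \<subseteq> cedges ys" unfolding C_def uedges_def by auto
  next
    show "cedges ys \<subseteq> uedges C"
    proof
      fix e assume "e \<in> cedges ys"
      then have "e \<in> uedges G" using s by blast
      then obtain x where "x \<in> G" "fst x = e" by (rule uedges_E)
      then have "x \<in> C" using \<open>e \<in> cedges ys\<close> unfolding C_def by simp
      then show "e \<in> uedges C" using \<open>fst x = e\<close> in_uedges by metis
    qed
  qed
  have CG: "C \<subseteq> G" unfolding C_def by blast
  have "is_cgraph C" using cgraph_subset[OF cg CG] .
  then have "is_cycle C" unfolding is_cycle_def using d ue by blast
  then show ?thesis using CG by blast
qed

lemma tpath_unique:
  assumes cg: "is_cgraph T" and ac: "\<not> (\<exists>C \<subseteq> T. is_cycle C)"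
  shows "tpath T xs \<Longrightarrow> tpath T ys \<Longrightarrow> hd xs = hd ys \<Longrightarrow> last xs = last ys \<Longrightarrow> xs = ys"
proof (induction "length xs + length ys" arbitrary: xs ys rule: less_induct)
  case less
  obtain r xs' where xs: "xs = r # xs'" using less.prems unfolding tpath_def by (cases xs) auto
  obtain ys' where ys: "ys = r # ys'" using less.prems xs unfolding tpath_def by (cases ys) auto
  have dx: "distinct xs" and dy: "distinct ys" using less.prems tpath_def by auto
  have px: "pedges xs \<subseteq> uedges T" and py: "pedges ys \<subseteq> uedges T" using less.prems tpath_def by auto
  show ?case
  proof (cases "xs' = []")
    case True
    then have "last ys = r" using less.prems xs by simp
    then have "ys' = []" using dy ys by (cases ys' rule: rev_cases) auto
    then show ?thesis using xs ys True by simp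
  next
    case xne: False
    show ?thesis
    proof (cases "ys' = []")
      case True
      then have "last xs = r" using less.prems ys by simp
      then have "xs' = []" using dx xs by (cases xs' rule: rev_cases) auto
      then show ?thesis using xne by simp
    next
      case yne: False
      have lx: "last xs' = last ys'" using less.prems xs ys xne yne by simp
      show ?thesis
      proof (cases "hd xs' = hd ys'")
        case True
        have "tpath T xs'" unfolding tpath_def using dx px xs xne pedges_sub_app2[where xs="[r]" and ys=xs'] by auto
        moreover have "tpath T ys'" unfolding tpath_def using dy py ys yne pedges_sub_app2[where xs="[r]" and ys=ys'] by auto
        ultimately have "xs' = ys'" using less.hyps[of xs' ys'] xs ys True lx by simp
        then show ?thesis using xs ys by simp
      next
        case hne: False
        have "\<exists>x\<in>set xs'. x \<in> set ys'" using lx xne yne by (metis last_in_set)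
        then obtain a z b where azb: "xs' = a @ z # b" "z \<in> set ys'" "\<forall>x\<in>set a. x \<notin> set ys'"
          using split_list_first_prop[of xs' "\<lambda>x. x \<in> set ys'"] by blast
        obtain c d where cd: "ys' = c @ z # d" using azb(2) split_list by metis
        define cl where "cl = r # a @ z # rev c"
        have rn: "r \<notin> set xs'" "r \<notin> set ys'" using dx dy xs ys by auto
        have dxs': "distinct xs'" using dx xs by simp
        have dys': "distinct ys'" using dy ys by simp
        have f1: "distinct a" "z \<notin> set a" using dxs' azb(1) by auto
        have f2: "distinct c" "z \<notin> set c" using dys' cd by auto
        have f3: "set a \<inter> set c = {}" using azb(3) cd by auto
        have f4: "r \<notin> set a" "r \<noteq> z" "r \<notin> set c" using rn azb(1) cd by auto
        have dcl: "distinct cl" unfolding cl_def using f1 f2 f3 f4 by auto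
        have l3: "length cl \<ge> 3"
        proof (rule ccontr)
          assume "\<not> 3 \<le> length cl"
          moreover have "length cl = length a + length c + 2" by (simp add: cl_def)
          ultimately have "length a + length c = 0" by linarith
          then have "a = []" "c = []" by simp_all
          then show False using azb cd hne by simp
        qed
        have lastcl: "last cl = hd ys'"
        proof (cases "c = []")
          case True then show ?thesis unfolding cl_def using cd by simp
        next
          case False then show ?thesis unfolding cl_def using cd by (simp add: last_rev)
        qed
        have hdx: "hd (a @ [z]) = hd xs'" using azb by (cases a) auto
        have "pedges cl = insert {r, hd xs'} (pedges (a @ [z]) \<union> pedges (z # rev c))"
        proof -
          have "pedges cl = insert {r, hd (a @ z # rev c)} (pedges (a @ z # rev c))"
            unfolding cl_def by (cases "a @ z # rev c") auto
          moreover have "hd (a @ z # rev c) = hd xs'" using hdx by (cases a) auto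
          ultimately show ?thesis using pedges_append[of a z "rev c"] by simp
        qed
        moreover have "{r, hd xs'} \<in> uedges T" using px xs xne by (cases xs') auto
        moreover have "pedges (a @ [z]) \<subseteq> uedges T"
        proof -
          have "pedges (a @ [z]) \<subseteq> pedges xs'" using azb pedges_append[of a z b] by auto
          also have "\<dots> \<subseteq> pedges xs" using xs pedges_sub_app2[where xs="[r]" and ys=xs'] by simp
          finally show ?thesis using px by blast
        qed
        moreover have "pedges (z # rev c) \<subseteq> uedges T"
        proof -
          have "pedges (z # rev c) = pedges (c @ [z])" by (metis pedges_rev rev.simps(2) rev_rev_ident)
          also have "\<dots> \<subseteq> pedges ys'" using cd pedges_append[of c z d] by auto
          also have "\<dots> \<subseteq> pedges ys" using ys pedges_sub_app2[where xs="[r]" and ys=ys'] by simp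
          finally show ?thesis using py by blast
        qed
        moreover have "{last cl, hd cl} \<in> uedges T"
        proof -
          have "{r, hd ys'} \<in> uedges T" using py ys yne by (cases ys') auto
          then show ?thesis using lastcl by (simp add: cl_def insert_commute)
        qed
        ultimately have "cedges cl \<subseteq> uedges T" using cedges_alt[of cl] by (simp add: cl_def)
        then show ?thesis using mk_cycle[OF cg dcl l3] ac by blast
      qed
    qed
  qed
qed

lemma path_exists: "(x,y) \<in> (adj G)\<^sup>* \<Longrightarrow> \<exists>xs. tpath G xs \<and> hd xs = x \<and> last xs = y"
proof (induction rule: converse_rtrancl_induct)
  case base
  then show ?case by (intro exI[of _ "[y]"]) (simp add: tpath_def)
next
  case (step x z)
  then obtain zs where zs: "tpath G zs" "hd zs = z" "last zs = y" by blast
  have xz: "{x,z} \<in> uedges G" using step(1) adj_def by auto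
  show ?case
  proof (cases "x \<in> set zs")
    case True
    then obtain a b where ab: "zs = a @ x # b" using split_list by metis
    have "tpath G (x # b)"
      using zs(1) ab pedges_sub_app2[where xs=a and ys="x#b"] unfolding tpath_def by auto
    moreover have "last (x # b) = y" using zs(3) ab by auto
    ultimately show ?thesis by (intro exI[of _ "x # b"]) simp
  next
    case False
    have "zs \<noteq> []" using zs tpath_def by auto
    then have "pedges (x # zs) = insert {x, z} (pedges zs)" using zs(2) by (cases zs) auto
    then have "tpath G (x # zs)" using zs(1) xz False unfolding tpath_def by auto
    moreover have "last (x # zs) = y" using zs tpath_def by auto
    ultimately show ?thesis by (intro exI[of _ "x # zs"]) simp
  qed
qed

lemma tree_facts:
  assumes "is_tree T"
  shows "is_cgraph T" "\<not> (\<exists>C \<subseteq> T. is_cycle C)" "finite (verts T)" "verts T \<noteq> {}" "root T \<in> verts T"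
    "\<And>x. x \<in> verts T \<Longrightarrow> \<exists>xs. tpath T xs \<and> hd xs = root T \<and> last xs = x"
proof -
  show cg: "is_cgraph T" "\<not> (\<exists>C \<subseteq> T. is_cycle C)" using assms unfolding is_tree_def by blast+
  have "\<forall>x\<in>T. finite (fst x)" using cg is_cgraph_def by (metis card.infinite zero_neq_numeral)
  then show fv: "finite (verts T)" using cg unfolding verts_def is_cgraph_def by auto
  obtain x where "x \<in> T" using assms is_tree_def by blast
  moreover have "fst x \<noteq> {}" using cg calculation is_cgraph_def by fastforce
  ultimately show ne: "verts T \<noteq> {}" unfolding verts_def by blast
  show r: "root T \<in> verts T" unfolding root_def using fv ne by simp
  fix y assume "y \<in> verts T"
  then have "(root T, y) \<in> (adj T)\<^sup>*" using assms r is_tree_def by blast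
  then show "\<exists>xs. tpath T xs \<and> hd xs = root T \<and> last xs = y" using path_exists by blast
qed

lemma depth_eq:
  assumes "is_tree T" "tpath T xs" "hd xs = root T" "last xs = x"
  shows "depth T x = length xs - 1"
  unfolding depth_def
proof (rule the_equality)
  show "\<exists>ys. distinct ys \<and> ys \<noteq> [] \<and> hd ys = root T \<and> last ys = x \<and> pedges ys \<subseteq> uedges T \<and> length xs - 1 = length ys - 1"
    using assms tpath_def by blast
next
  fix k assume "\<exists>ys. distinct ys \<and> ys \<noteq> [] \<and> hd ys = root T \<and> last ys = x \<and> pedges ys \<subseteq> uedges T \<and> k = length ys - 1"
  then obtain ys where ys: "tpath T ys" "hd ys = root T" "last ys = x" "k = length ys - 1"
    unfolding tpath_def by blast
  have "hd ys = hd xs" "last ys = last xs" using ys assms by simp_all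
  then have "ys = xs" using tpath_unique[OF tree_facts(1,2)[OF assms(1)] ys(1) assms(2)] by blast
  then show "k = length xs - 1" using ys by simp
qed

lemma tpath_prefix: "tpath T (p @ q) \<Longrightarrow> p \<noteq> [] \<Longrightarrow> tpath T p"
  unfolding tpath_def using pedges_sub_app1[of p q] by auto

lemma neighbor_depth:
  assumes tr: "is_tree T" and ab: "{a,b} \<in> uedges T" "a \<noteq> b"
  shows "depth T a = depth T b + 1 \<or> depth T b = depth T a + 1"
proof -
  have aT: "a \<in> verts T" "b \<in> verts T" using ab verts_uedges by auto
  obtain pa where pa: "tpath T pa" "hd pa = root T" "last pa = a" using tree_facts(6)[OF tr aT(1)] by blast
  have da: "depth T a = length pa - 1" using depth_eq[OF tr pa] .
  show ?thesis
  proof (cases "b \<in> set pa")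
    case True
    then obtain q r where qr: "pa = q @ b # r" using split_list by metis
    have tq: "tpath T (q @ [b])" using tpath_prefix[of T "q @ [b]" r] pa(1) qr by simp
    have hq: "hd (q @ [b]) = root T" using pa(2) qr by (cases q) auto
    have db: "depth T b = length q" using depth_eq[OF tr tq hq] by simp
    have rne: "r \<noteq> []" using qr pa(3) ab(2) by auto
    have "a \<in> set r" using rne qr pa(3) by auto
    then have an: "a \<notin> set (q @ [b])" using pa(1) qr unfolding tpath_def by auto
    have "tpath T (q @ [b, a])"
    proof -
      have "pedges (q @ [b, a]) = insert {b, a} (pedges (q @ [b]))"
        using pedges_snoc[of "q @ [b]" a] by simp
      moreover have "{b,a} \<in> uedges T" using ab by (simp add: insert_commute)
      ultimately show ?thesis using tq an unfolding tpath_def by auto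
    qed
    moreover have "hd (q @ [b, a]) = root T" using hq by (cases q) auto
    moreover have "last (q @ [b, a]) = last pa" using pa(3) by simp
    ultimately have "q @ [b, a] = pa" using tpath_unique[OF tree_facts(1,2)[OF tr], of "q @ [b, a]" pa] pa by simp
    then have "length pa = length q + 2" by auto
    then show ?thesis using da db by simp
  next
    case False
    have pne: "pa \<noteq> []" using pa tpath_def by auto
    have "tpath T (pa @ [b])"
    proof -
      have "pedges (pa @ [b]) = insert {a, b} (pedges pa)" using pedges_snoc[OF pne] pa(3) by simp
      then show ?thesis using pa(1) False ab unfolding tpath_def by auto
    qed
    moreover have "hd (pa @ [b]) = root T" using pa pne by simp
    ultimately have "depth T b = length (pa @ [b]) - 1" using depth_eq[OF tr] by simp
    then have "depth T b = length pa" by simp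
    then show ?thesis using da pne by simp
  qed
qed


lemma Union_set_nth: "x \<in> \<Union> (set xs) \<longleftrightarrow> (\<exists>i<length xs. x \<in> xs ! i)"
  by (metis UnionE UnionI in_set_conv_nth nth_mem)

lemma part_sub: "is_partition F ps \<Longrightarrow> i < length ps \<Longrightarrow> ps ! i \<subseteq> F"
  unfolding is_partition_def by (auto simp: Union_set_nth)

lemma part_disj: "is_partition F ps \<Longrightarrow> i < length ps \<Longrightarrow> j < length ps \<Longrightarrow> i \<noteq> j \<Longrightarrow>
   card (verts (ps ! i) \<inter> verts (ps ! j)) \<le> 1 \<and> colors (ps ! i) \<inter> colors (ps ! j) = {}"
  unfolding is_partition_def by blast

lemma partition_update:
  assumes P: "is_partition F ps" and j: "j < length ps" and e: "e \<in> ps ! j"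
    and vT: "verts T' = verts (ps ! j)" and T': "T' = insert f (ps ! j - {e})"
    and fc: "snd f \<notin> colors F"
  shows "is_partition (insert f (F - {e})) (ps[j := T'])"
proof -
  have U: "\<Union> (set ps) = F" using P is_partition_def by blast
  have eo: "e \<notin> ps ! i" if "i < length ps" "i \<noteq> j" for i
  proof
    assume "e \<in> ps ! i"
    then have "snd e \<in> colors (ps ! i) \<inter> colors (ps ! j)" using e in_colors by blast
    then show False using part_disj[OF P that(1) j that(2)] by blast
  qed
  have "\<Union> (set (ps[j := T'])) = insert f (F - {e})"
  proof
    show "\<Union> (set (ps[j := T'])) \<subseteq> insert f (F - {e})"
    proof
      fix x assume "x \<in> \<Union> (set (ps[j := T']))"
      then obtain i where i: "i < length ps" "x \<in> ps[j := T'] ! i" using Union_set_nth[of x "ps[j := T']"] by auto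
      show "x \<in> insert f (F - {e})"
      proof (cases "i = j")
        case True
        then have "x \<in> T'" using i j by simp
        then show ?thesis using T' part_sub[OF P j] by blast
      next
        case False
        then have "x \<in> ps ! i" using i by simp
        then show ?thesis using eo[OF i(1) False] part_sub[OF P i(1)] by blast
      qed
    qed
  next
    show "insert f (F - {e}) \<subseteq> \<Union> (set (ps[j := T']))"
    proof
      fix x assume x: "x \<in> insert f (F - {e})"
      show "x \<in> \<Union> (set (ps[j := T']))"
      proof (cases "x = f")
        case True
        then have "x \<in> ps[j := T'] ! j" using j T' by simp
        then show ?thesis using Union_set_nth[of x "ps[j := T']"] j by auto
      next
        case False
        then have "x \<in> F" "x \<noteq> e" using x by auto
        then obtain i where i: "i < length ps" "x \<in> ps ! i" using U Union_set_nth[of x ps] by auto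
        show ?thesis
        proof (cases "i = j")
          case True
          then have "x \<in> ps[j := T'] ! j" using i j T' \<open>x \<noteq> e\<close> by simp
          then show ?thesis using Union_set_nth[of x "ps[j := T']"] j by auto
        next
          case False
          then have "x \<in> ps[j := T'] ! i" using i by simp
          then show ?thesis using Union_set_nth[of x "ps[j := T']"] i by auto
        qed
      qed
    qed
  qed
  moreover have "card (verts (ps[j := T'] ! a) \<inter> verts (ps[j := T'] ! b)) \<le> 1 \<and>
      colors (ps[j := T'] ! a) \<inter> colors (ps[j := T'] ! b) = {}"
    if ab: "a < length ps" "b < length ps" "a \<noteq> b" for a b
  proof -
    have V: "verts (ps[j := T'] ! i) = verts (ps ! i)" if "i < length ps" for i
      using vT that by (cases "i = j") auto
    have C: "colors (ps[j := T'] ! i) \<subseteq> insert (snd f) (colors (ps ! i))" if "i < length ps" for i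
    proof (cases "i = j")
      case True then show ?thesis using that T' by (auto simp: colors_def)
    next
      case False then show ?thesis using that by auto
    qed
    have nf: "snd f \<notin> colors (ps ! i)" if "i < length ps" for i
      using fc colors_mono[OF part_sub[OF P that]] by blast
    have D: "card (verts (ps ! a) \<inter> verts (ps ! b)) \<le> 1" "colors (ps ! a) \<inter> colors (ps ! b) = {}"
      using part_disj[OF P ab] by auto
    have "colors (ps[j := T'] ! a) \<inter> colors (ps[j := T'] ! b) = {}"
    proof (cases "a = j")
      case True
      then have "colors (ps[j := T'] ! b) = colors (ps ! b)" using ab by simp
      then show ?thesis using C[OF ab(1)] D(2) nf[OF ab(2)] by blast
    next
      case False
      then have "colors (ps[j := T'] ! a) = colors (ps ! a)" using ab by simp
      then show ?thesis using C[OF ab(2)] D(2) nf[OF ab(1)] by blast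
    qed
    then show ?thesis using V[OF ab(1)] V[OF ab(2)] D(1) by simp
  qed
  ultimately show ?thesis unfolding is_partition_def by simp
qed

lemma total_depth_less:
  assumes k: "k < length Ts" and v: "verts T' = verts (Ts ! k)"
    and le: "\<And>x. x \<in> verts (Ts ! k) \<Longrightarrow> depth T' x \<le> depth (Ts ! k) x"
    and lt: "y \<in> verts (Ts ! k)" "depth T' y < depth (Ts ! k) y"
    and fin: "finite (verts (Ts ! k))"
  shows "total_depth (Ts[k := T']) < total_depth Ts"
proof -
  have inner: "(\<Sum>x\<in>verts T'. depth T' x) < (\<Sum>x\<in>verts (Ts ! k). depth (Ts ! k) x)"
    unfolding v using sum_strict_mono_ex1[OF fin, of "depth T'" "depth (Ts ! k)"] le lt by blast
  show ?thesis unfolding total_depth_def length_list_update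
  proof (rule sum_strict_mono_ex1)
    show "finite {..<length Ts}" by simp
    show "\<forall>i\<in>{..<length Ts}. (\<Sum>x\<in>verts (Ts[k := T'] ! i). depth (Ts[k := T'] ! i) x)
        \<le> (\<Sum>x\<in>verts (Ts ! i). depth (Ts ! i) x)"
    proof
      fix i assume "i \<in> {..<length Ts}"
      show "(\<Sum>x\<in>verts (Ts[k := T'] ! i). depth (Ts[k := T'] ! i) x) \<le> (\<Sum>x\<in>verts (Ts ! i). depth (Ts ! i) x)"
      proof (cases "i = k")
        case True then show ?thesis using inner k by simp
      next
        case False then show ?thesis by simp
      qed
    qed
    show "\<exists>i\<in>{..<length Ts}. (\<Sum>x\<in>verts (Ts[k := T'] ! i). depth (Ts[k := T'] ! i) x)
        < (\<Sum>x\<in>verts (Ts ! i). depth (Ts ! i) x)"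
      using inner k by (intro bexI[of _ k]) auto
  qed
qed


lemma path_step:
  assumes tr: "is_tree T" and p: "tpath T p" "hd p = root T" "last p = a"
    and ab: "{a,b} \<in> uedges T" and d: "depth T a + 1 = depth T b"
  shows "b \<notin> set p" "tpath T (p @ [b])" "hd (p @ [b]) = root T" "last (p @ [b]) = b" "depth T b = length p"
proof -
  have pne: "p \<noteq> []" using p(1) tpath_def by auto
  have da: "depth T a = length p - 1" using depth_eq[OF tr p] .
  show nb: "b \<notin> set p"
  proof
    assume "b \<in> set p"
    then obtain q r where qr: "p = q @ b # r" using split_list by metis
    have tq: "tpath T (q @ [b])" using tpath_prefix[of T "q @ [b]" r] p(1) qr by simp
    have hq: "hd (q @ [b]) = root T" using p(2) qr by (cases q) auto
    have "depth T b = length q" using depth_eq[OF tr tq hq] by simp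
    moreover have "length q + 1 \<le> length p" using qr by simp
    ultimately show False using da d by linarith
  qed
  show tp: "tpath T (p @ [b])"
  proof -
    have "pedges (p @ [b]) = insert {a,b} (pedges p)" using pedges_snoc[OF pne] p(3) by simp
    then show ?thesis using p(1) nb ab unfolding tpath_def by auto
  qed
  show h: "hd (p @ [b]) = root T" using p(2) pne by simp
  show "last (p @ [b]) = b" by simp
  show "depth T b = length p" using depth_eq[OF tr tp h] by simp
qed

lemma tpath_uniq': "is_tree T \<Longrightarrow> tpath T xs \<Longrightarrow> tpath T ys \<Longrightarrow> hd xs = hd ys \<Longrightarrow> last xs = last ys \<Longrightarrow> xs = ys"
  using tpath_unique[OF tree_facts(1,2)] by blast

lemma TL:
  assumes st: "standing_setup n m D" and ex: "extremal_frankenstein m D F Cs Bs Ts"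
    and k: "k < length Ts" and e1: "e1 \<in> Ts ! k" "fst e1 = {u,w}" and e2: "e2 \<in> Ts ! k" "fst e2 = {w,v}"
    and f: "f \<in> union_D m D" "fst f = {u,v}" "snd f \<notin> colors F" "{u,v} \<notin> uedges F"
    and dist: "u \<noteq> v" "u \<noteq> w" "v \<noteq> w"
    and dep: "depth (Ts ! k) u + 1 = depth (Ts ! k) w"
  shows False
proof -
  define T where "T = Ts ! k"
  have FU: "F \<subseteq> union_D m D" using ex unfolding extremal_frankenstein_def by blast
  have fr: "frankenstein F Cs Bs Ts" using ex unfolding extremal_frankenstein_def by blast
  have opt: "\<not> better (params F' Cs' Bs' Ts') (params F Cs Bs Ts)"
    if "F' \<subseteq> union_D m D" "frankenstein F' Cs' Bs' Ts'" for F' Cs' Bs' Ts'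
    using ex that unfolding extremal_frankenstein_def by blast
  have cgF: "is_cgraph F" using fr unfolding frankenstein_def by blast
  have P: "is_partition F (Cs @ Bs @ Ts)" using fr unfolding frankenstein_def by blast
  have len: "length Cs + length Bs + length Ts \<ge> 1" using fr unfolding frankenstein_def by blast
  have fC: "\<forall>C\<in>set Cs. long_rainbow_odd_cycle C" using fr unfolding frankenstein_def by blast
  have fB: "\<forall>B\<in>set Bs. bad_piece B" using fr unfolding frankenstein_def by blast
  have fT: "\<forall>T\<in>set Ts. is_tree T \<and> rainbow T" using fr unfolding frankenstein_def by blast
  have fD: "\<forall>i<length Ts. \<forall>j<length Ts. i \<noteq> j \<longrightarrow> verts (Ts ! i) \<inter> verts (Ts ! j) = {}"
    using fr unfolding frankenstein_def by blast
  have st3: "\<not> (\<exists>H. is_cgraph H \<and> H \<subseteq> union_D m D \<and> rainbow_even_cycle H)"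
    using st unfolding standing_setup_def by blast
  have noev: "\<not> rainbow_even_cycle H" if "H \<subseteq> union_D m D" for H
  proof
    assume "rainbow_even_cycle H"
    then have "is_cgraph H" unfolding rainbow_even_cycle_def is_cycle_def by blast
    then show False using st3 that \<open>rainbow_even_cycle H\<close> by blast
  qed
  define ps where "ps = Cs @ Bs @ Ts"
  define j0 where "j0 = length Cs + length Bs + k"
  have j0: "j0 < length ps" "ps ! j0 = T" using k by (simp_all add: ps_def j0_def T_def nth_append)
  have Tin: "T \<in> set Ts" using k T_def by simp
  have tT: "is_tree T" and rbT: "rainbow T" using fT Tin by auto
  have TF: "T \<subseteq> F" using part_sub[OF P[folded ps_def] j0(1)] j0(2) by simp
  note tf = tree_facts[OF tT]
  have e1T: "e1 \<in> T" "fst e1 = {u,w}" and e2T: "e2 \<in> T" "fst e2 = {w,v}" using e1 e2 T_def by auto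
  have dep': "depth T u + 1 = depth T w" using dep T_def by simp
  have ueT: "{u,w} \<in> uedges T" "{w,v} \<in> uedges T" using in_uedges e1T e2T by metis+
  have uvT: "{u,v} \<notin> uedges T" using f(4) uedges_mono[OF TF] by blast
  have vs: "u \<in> verts T" "v \<in> verts T" "w \<in> verts T" using in_verts e1T e2T by auto
  obtain pu where pu: "tpath T pu" "hd pu = root T" "last pu = u" using tf(6)[OF vs(1)] by blast
  note S1 = path_step[OF tT pu ueT(1) dep']
  have dv: "depth T w + 1 = depth T v"
  proof -
    have "{v,w} \<in> uedges T" using ueT(2) by (simp add: insert_commute)
    have "depth T w = depth T v + 1 \<or> depth T v = depth T w + 1"
      using neighbor_depth[OF tT ueT(2) dist(3)[symmetric]] .
    moreover have "depth T w \<noteq> depth T v + 1"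
    proof
      assume a: "depth T w = depth T v + 1"
      obtain pv where pv: "tpath T pv" "hd pv = root T" "last pv = v" using tf(6)[OF vs(2)] by blast
      note S2 = path_step[OF tT pv \<open>{v,w} \<in> uedges T\<close> a[symmetric]]
      have "pv @ [w] = pu @ [w]" using tpath_uniq'[OF tT S2(2) S1(2)] S1(3,4) S2(3,4) by simp
      then show False using pu(3) pv(3) dist(1) by simp
    qed
    ultimately show ?thesis by simp
  qed
  have pwt: "tpath T (pu @ [w])" "hd (pu @ [w]) = root T" "last (pu @ [w]) = w" using S1 by auto
  note S3 = path_step[OF tT pwt ueT(2) dv]
  have pvv: "tpath T (pu @ [w, v])" "hd (pu @ [w, v]) = root T" "last (pu @ [w,v]) = v"
    using S3 by auto
  have wpu: "w \<notin> set pu" using S1(1) .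
  have pune: "pu \<noteq> []" using pu(1) tpath_def by auto
  define T' where "T' = insert f (T - {e2})"
  have e2f: "e2 \<noteq> f" using e2T f(2) dist by (auto simp: doubleton_eq_iff)
  have cgT: "is_cgraph T" using tf(1) .
  have uT': "uedges T' = insert {u,v} (uedges T - {{w,v}})"
    unfolding T'_def using uedges_diff[OF cgT, of "{e2}"] e2T f(2) by simp
  have cgT': "is_cgraph T'"
  proof -
    have fin: "finite T'" using cgT is_cgraph_def T'_def by simp
    have c2: "\<forall>x\<in>T'. card (fst x) = 2" using cgT dist(1) f(2) unfolding T'_def is_cgraph_def by auto
    have inj: "\<forall>x\<in>T'. \<forall>y\<in>T'. fst x = fst y \<longrightarrow> x = y"
    proof (intro ballI impI)
      fix x y assume xy: "x \<in> T'" "y \<in> T'" "fst x = fst y"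
      show "x = y"
      proof (cases "x = f \<or> y = f")
        case True
        then show ?thesis using xy uvT f(2) in_uedges unfolding T'_def by (metis Diff_iff insertE)
      next
        case False
        then have "x \<in> T" "y \<in> T" using xy unfolding T'_def by auto
        then show ?thesis using cgraph_same[OF cgT] xy(3) by blast
      qed
    qed
    show ?thesis unfolding is_cgraph_def using fin c2 inj by blast
  qed
  have vT': "verts T' = verts T"
  proof
    show "verts T' \<subseteq> verts T"
      unfolding verts_uedges uT' using vs ueT verts_uedges by auto
  next
    show "verts T \<subseteq> verts T'"
    proof
      fix x assume "x \<in> verts T"
      then obtain e where e: "e \<in> uedges T" "x \<in> e" unfolding verts_uedges by blast
      have uw: "{u,w} \<noteq> {w,v}" using dist by (auto simp: doubleton_eq_iff)
      show "x \<in> verts T'"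
      proof (cases "e = {w,v}")
        case True
        then have "x = w \<or> x = v" using e by auto
        moreover have "{u,w} \<in> uedges T'" "{u,v} \<in> uedges T'" using uT' ueT uw by auto
        ultimately show ?thesis unfolding verts_uedges by blast
      next
        case False
        then have "e \<in> uedges T'" using uT' e by auto
        then show ?thesis using e unfolding verts_uedges by blast
      qed
    qed
  qed
  have conn: "\<forall>x\<in>verts T'. \<forall>y\<in>verts T'. (x, y) \<in> (adj T')\<^sup>*"
  proof -
    have "adj T \<subseteq> (adj T')\<^sup>*"
    proof
      fix p assume "p \<in> adj T"
      then obtain a b where p: "p = (a,b)" "{a,b} \<in> uedges T" unfolding adj_def by auto
      show "p \<in> (adj T')\<^sup>*"
      proof (cases "{a,b} = {w,v}")
        case True
        have A: "(w,u) \<in> adj T'" "(u,w) \<in> adj T'" "(u,v) \<in> adj T'" "(v,u) \<in> adj T'"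
          using uT' ueT dist unfolding adj_def by (auto simp: insert_commute doubleton_eq_iff)
        have "(a = w \<and> b = v) \<or> (a = v \<and> b = w)" using True by (auto simp: doubleton_eq_iff)
        then show ?thesis using A p
          by (metis converse_rtrancl_into_rtrancl r_into_rtrancl)
      next
        case False
        then have "(a,b) \<in> adj T'" using p uT' unfolding adj_def by auto
        then show ?thesis using p by blast
      qed
    qed
    then have "(adj T)\<^sup>* \<subseteq> (adj T')\<^sup>*" by (metis rtrancl_subset_rtrancl)
    moreover have "\<forall>x\<in>verts T. \<forall>y\<in>verts T. (x, y) \<in> (adj T)\<^sup>*" using tT unfolding is_tree_def by blast
    ultimately show ?thesis using vT' by blast
  qed
  have acT': "\<not> (\<exists>C \<subseteq> T'. is_cycle C)"
  proof
    assume "\<exists>C \<subseteq> T'. is_cycle C"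
    then obtain C where C: "C \<subseteq> T'" "is_cycle C" by blast
    show False
    proof (cases "f \<in> C")
      case False
      then have "C \<subseteq> T" using C(1) unfolding T'_def by blast
      then show False using tf(2) C(2) by blast
    next
      case True
      obtain cl where cl: "distinct cl" "length cl \<ge> 3" "hd cl = u" "last cl = v"
        "pedges cl = uedges C - {{u,v}}"
        using cycle_edge_path[OF C(2) True f(2)] by blast
      have "uedges C \<subseteq> uedges T'" using uedges_mono[OF C(1)] .
      then have pcl: "pedges cl \<subseteq> uedges T - {{w,v}}" using cl(5) uT' by blast
      then have "tpath T cl" using cl unfolding tpath_def by auto
      moreover have "tpath T [u,w,v]" using ueT dist unfolding tpath_def by auto
      ultimately have "cl = [u,w,v]" using tpath_uniq'[OF tT] cl(3,4) by simp
      then show False using pcl by simp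
    qed
  qed
  have tT': "is_tree T'"
  proof -
    have "T' \<noteq> {}" unfolding T'_def by blast
    then show ?thesis unfolding is_tree_def using cgT' conn acT' by blast
  qed
  have rbT': "rainbow T'"
  proof -
    have injT: "inj_on snd T" using rbT rainbow_inj cgT cgraph_finite by blast
    have i1: "inj_on snd (T - {e2})" using injT by (rule inj_on_subset) auto
    have "snd f \<notin> snd ` T" using f(3) colors_mono[OF TF] unfolding colors_def by blast
    then have "snd f \<notin> snd ` (T - {e2} - {f})" by blast
    then have "inj_on snd T'" unfolding T'_def using i1 by (simp only: inj_on_insert) simp
    then show ?thesis using rainbow_inj cgT' cgraph_finite by blast
  qed
  have rootT': "root T' = root T" unfolding root_def using vT' by simp
  have DC: "depth T' x \<le> depth T x \<and> ({w,v} \<in> pedges px \<longrightarrow> depth T' x < depth T x)"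
    if px: "tpath T px" "hd px = root T" "last px = x" for x px
  proof -
    have dT: "depth T x = length px - 1" using depth_eq[OF tT px] .
    show ?thesis
    proof (cases "{w,v} \<in> pedges px")
      case False
      have "pedges px \<subseteq> uedges T" using px(1) tpath_def by blast
      then have "tpath T' px" using px(1) False uT' unfolding tpath_def by auto
      then have "depth T' x = length px - 1" using depth_eq[OF tT'] px rootT' by simp
      then show ?thesis using dT False by simp
    next
      case True
      then obtain p q where pq: "px = p @ w # v # q \<or> px = p @ v # w # q" using pedges_split by blast
      have dpx: "distinct px" using px(1) tpath_def by blast
      have ppx: "pedges px \<subseteq> uedges T" using px(1) tpath_def by blast
      show ?thesis
      proof (cases "px = p @ w # v # q")
        case A: True
        have tp: "tpath T (p @ [w, v])" using tpath_prefix[of T "p @ [w, v]" q] px(1) A by simp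
        have hp: "hd (p @ [w,v]) = root T" using px(2) A by (cases p) auto
        have "p @ [w, v] = pu @ [w, v]" using tpath_uniq'[OF tT tp pvv(1)] hp pvv(2,3) by simp
        then have ppu: "p = pu" by simp
        define px' where "px' = pu @ v # q"
        have d': "distinct px'" using dpx A ppu unfolding px'_def by simp
        have wq: "w \<notin> set (v # q)" using dpx A dist(3) by auto
        have pe1: "pedges px' = insert {u,v} (pedges pu) \<union> pedges (v # q)"
          unfolding px'_def using pedges_append[of pu v q] pedges_snoc[OF pune, of v] pu(3) by simp
        have a1: "pedges pu \<subseteq> uedges T" using pu(1) tpath_def by blast
        have a2: "{w,v} \<notin> pedges pu" using notin_pedges[OF wpu] .
        have a3: "pedges (v # q) \<subseteq> uedges T"
          using ppx A pedges_sub_app2[where xs="p @ [w]" and ys="v # q"] by simp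
        have a4: "{w,v} \<notin> pedges (v # q)" using notin_pedges[OF wq] .
        have b1: "pedges pu \<subseteq> uedges T - {{w,v}}" using a1 a2 by blast
        have b2: "pedges (v # q) \<subseteq> uedges T - {{w,v}}" using a3 a4 by blast
        have "pedges px' \<subseteq> uedges T'" unfolding pe1 uT' using b1 b2 by blast
        then have tp': "tpath T' px'" using d' unfolding tpath_def px'_def by simp
        have "hd px' = root T'" using pu(2) pune rootT' unfolding px'_def by simp
        moreover have "last px' = x" using px(3) A ppu unfolding px'_def by simp
        ultimately have "depth T' x = length px' - 1" using depth_eq[OF tT' tp'] by simp
        moreover have "length px' + 1 = length px" using A ppu unfolding px'_def by simp
        moreover have "length px' \<ge> 1" unfolding px'_def by simp
        ultimately have "depth T' x < depth T x" using dT by linarith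
        then show ?thesis by simp
      next
        case False
        then have B: "px = p @ v # w # q" using pq by blast
        have tp: "tpath T (p @ [v, w])" using tpath_prefix[of T "p @ [v, w]" q] px(1) B by simp
        have hp: "hd (p @ [v, w]) = root T" using px(2) B by (cases p) auto
        have "p @ [v, w] = pu @ [w]" using tpath_uniq'[OF tT tp pwt(1)] hp pwt(2,3) by simp
        then have "last pu = v" by (metis append.assoc append1_eq_conv append_Cons append_Nil last_snoc)
        then show ?thesis using pu(3) dist(1) by simp
      qed
    qed
  qed
  have le: "depth T' x \<le> depth T x" if "x \<in> verts T" for x
    using tf(6)[OF that] DC by blast
  have lt: "depth T' v < depth T v"
  proof -
    have "{w,v} \<in> pedges (pu @ [w,v])" using pedges_snoc[of "pu @ [w]" v] by simp
    then show ?thesis using DC[OF pvv] by blast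
  qed
  define Ts' where "Ts' = Ts[k := T']"
  define F' where "F' = insert f (F - {e2})"
  have e2F: "e2 \<in> F" using TF e2T by blast
  have fF: "f \<notin> F" using f(3) in_colors by blast
  have ps': "Cs @ Bs @ Ts' = ps[j0 := T']" using k unfolding ps_def j0_def Ts'_def
    by (simp add: list_update_append)
  have P': "is_partition F' (Cs @ Bs @ Ts')"
  proof -
    have "verts T' = verts (ps ! j0)" using vT' j0 by simp
    moreover have "T' = insert f (ps ! j0 - {e2})" using j0 T'_def by simp
    moreover have "e2 \<in> ps ! j0" using j0 e2T by simp
    ultimately show ?thesis unfolding ps' F'_def
      using partition_update[OF P[folded ps_def] j0(1)] f(3) by blast
  qed
  have cgF': "is_cgraph F'"
  proof -
    have fin: "finite F'" using cgF is_cgraph_def F'_def by simp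
    have c2: "\<forall>x\<in>F'. card (fst x) = 2" using cgF dist(1) f(2) unfolding F'_def is_cgraph_def by auto
    have inj: "\<forall>x\<in>F'. \<forall>y\<in>F'. fst x = fst y \<longrightarrow> x = y"
    proof (intro ballI impI)
      fix x y assume xy: "x \<in> F'" "y \<in> F'" "fst x = fst y"
      show "x = y"
      proof (cases "x = f \<or> y = f")
        case True
        then show ?thesis using xy f(4) f(2) in_uedges unfolding F'_def by (metis Diff_iff insertE)
      next
        case False
        then have "x \<in> F" "y \<in> F" using xy unfolding F'_def by auto
        then show ?thesis using cgraph_same[OF cgF] xy(3) by blast
      qed
    qed
    show ?thesis unfolding is_cgraph_def using fin c2 inj by blast
  qed
  have F'U: "F' \<subseteq> union_D m D" using FU f(1) unfolding F'_def by blast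
  have frT: "\<forall>X\<in>set Ts'. is_tree X \<and> rainbow X"
    using fT tT' rbT' set_update_subset_insert[of Ts k T'] unfolding Ts'_def by blast
  have frD: "\<forall>i<length Ts'. \<forall>j<length Ts'. i \<noteq> j \<longrightarrow> verts (Ts' ! i) \<inter> verts (Ts' ! j) = {}"
  proof (intro allI impI)
    fix i j assume ij: "i < length Ts'" "j < length Ts'" "i \<noteq> j"
    have V: "verts (Ts' ! a) = verts (Ts ! a)" if "a < length Ts" for a
      using vT' that T_def unfolding Ts'_def by (cases "a = k") auto
    show "verts (Ts' ! i) \<inter> verts (Ts' ! j) = {}" using fD ij V unfolding Ts'_def by simp
  qed
  have frN: "\<not> (\<exists>H. H \<subseteq> F' \<and> rainbow_even_cycle H)" using noev F'U by blast
  have frF': "frankenstein F' Cs Bs Ts'"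
    unfolding frankenstein_def using cgF' P' len fC fB frT frD frN unfolding Ts'_def by simp
  have cardF: "card F' = card F"
  proof -
    have "finite F" using cgF is_cgraph_def by blast
    then show ?thesis unfolding F'_def using e2F fF
      by (simp add: card_insert_if) (metis One_nat_def Suc_pred card_gt_0_iff empty_iff)
  qed
  have tdl: "total_depth Ts' < total_depth Ts"
    unfolding Ts'_def
    using total_depth_less[OF k, of T' v] vT' le lt vs tf(3) T_def by simp
  have "better (params F' Cs Bs Ts') (params F Cs Bs Ts)"
    unfolding better_def params_def using cardF tdl by simp
  then show False using opt[OF F'U frF'] by blast
qed


lemma parts_set:
  assumes P: "is_partition F ps" and X: "X \<in> set ps" and Y: "Y \<in> set ps" and XY: "X \<noteq> Y"
  shows "card (verts X \<inter> verts Y) \<le> 1" "colors X \<inter> colors Y = {}"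
proof -
  obtain i where i: "i < length ps" "ps ! i = X" using X in_set_conv_nth by metis
  obtain j where j: "j < length ps" "ps ! j = Y" using Y in_set_conv_nth by metis
  have "i \<noteq> j" using i j XY by blast
  then show "card (verts X \<inter> verts Y) \<le> 1" "colors X \<inter> colors Y = {}"
    using part_disj[OF P i(1) j(1)] i j by auto
qed

lemma in_parts: "is_partition F ps \<Longrightarrow> e \<in> F \<Longrightarrow> \<exists>X\<in>set ps. e \<in> X"
  unfolding is_partition_def by blast

lemma parts_sub: "is_partition F ps \<Longrightarrow> X \<in> set ps \<Longrightarrow> X \<subseteq> F"
  unfolding is_partition_def by blast

lemma trees_disj:
  assumes fD: "\<forall>i<length Ts. \<forall>j<length Ts. i \<noteq> j \<longrightarrow> verts (Ts ! i) \<inter> verts (Ts ! j) = {}"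
    and X: "X \<in> set Ts" and Y: "Y \<in> set Ts" and XY: "X \<noteq> Y"
  shows "verts X \<inter> verts Y = {}"
proof -
  obtain i where i: "i < length Ts" "Ts ! i = X" using X in_set_conv_nth by metis
  obtain j where j: "j < length Ts" "Ts ! j = Y" using Y in_set_conv_nth by metis
  have "i \<noteq> j" using i j XY by blast
  then show ?thesis using fD i j by blast
qed

lemma pairs3: "distinct [a,b,c] \<Longrightarrow> x \<in> {a,b,c} \<Longrightarrow> y \<in> {a,b,c} \<Longrightarrow> x \<noteq> y \<Longrightarrow>
  {x,y} \<in> cedges [a,b,c]"
  by (auto simp: cedges_def insert_commute)

lemma cgraph_verts_finite: assumes cg: "is_cgraph G" shows "finite (verts G)"
proof -
  have "\<forall>x\<in>G. finite (fst x)" using cg unfolding is_cgraph_def by (metis card.infinite zero_neq_numeral)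
  then show ?thesis using cg unfolding verts_def is_cgraph_def by auto
qed

theorem proposition3p3:
  fixes n m :: nat and D :: "nat \<Rightarrow> cgraph"
    and F :: cgraph and Cs Bs Ts :: "cgraph list"
    and f :: "nat set \<times> nat" and C :: cgraph and u v w :: nat
  assumes "standing_setup n m D"
    and "extremal_frankenstein m D F Cs Bs Ts"
    and "outer_edge m D F f"
    and "fst f = {u, v}"
    and "outer_cycle F f C"
    and "card C = 3"
    and "verts C = {u, v, w}"
  shows "\<exists>k<length Ts. u \<in> verts (Ts ! k) \<and> v \<in> verts (Ts ! k) \<and> w \<in> verts (Ts ! k) \<and>
           u \<in> child (Ts ! k) w \<and> v \<in> child (Ts ! k) w"
proof -
  note st = assms(1) and ex = assms(2) and oe = assms(3) and fuv = assms(4) and oc = assms(5)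
    and c3 = assms(6) and vC = assms(7)
  have FU: "F \<subseteq> union_D m D" using ex unfolding extremal_frankenstein_def by blast
  have fr: "frankenstein F Cs Bs Ts" using ex unfolding extremal_frankenstein_def by blast
  have cgF: "is_cgraph F" using fr unfolding frankenstein_def by blast
  have P: "is_partition F (Cs @ Bs @ Ts)" using fr unfolding frankenstein_def by blast
  have fC: "\<forall>C\<in>set Cs. long_rainbow_odd_cycle C" using fr unfolding frankenstein_def by blast
  have fB: "\<forall>B\<in>set Bs. bad_piece B" using fr unfolding frankenstein_def by blast
  have fT: "\<forall>T\<in>set Ts. is_tree T \<and> rainbow T" using fr unfolding frankenstein_def by blast
  have fD: "\<forall>i<length Ts. \<forall>j<length Ts. i \<noteq> j \<longrightarrow> verts (Ts ! i) \<inter> verts (Ts ! j) = {}"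
    using fr unfolding frankenstein_def by blast
  have st3: "\<not> (\<exists>H. is_cgraph H \<and> H \<subseteq> union_D m D \<and> rainbow_even_cycle H)"
    using st unfolding standing_setup_def by blast
  have stD: "\<forall>i\<in>{1..m}. \<forall>x\<in>D i. snd x = i"
    using st unfolding standing_setup_def by blast
  have fin: "f \<in> (\<Union>l\<in>{1..m} - colors F. D l)" and nco: "\<not> (\<exists>g\<in>F. coincident g f)"
    using oe unfolding outer_edge_def by blast+
  obtain l where l: "l \<in> {1..m}" "l \<notin> colors F" "f \<in> D l" using fin by blast
  have fU: "f \<in> union_D m D" unfolding union_D_def using l by blast
  have sf: "snd f \<notin> colors F" using stD l by metis
  have uvF: "{u,v} \<notin> uedges F"
  proof
    assume "{u,v} \<in> uedges F"
    then obtain g where g: "g \<in> F" "fst g = {u,v}" by (rule uedges_E)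
    have "snd g \<noteq> snd f" using in_colors[OF g(1)] sf by metis
    then have "coincident g f" unfolding coincident_def using g(2) fuv by simp
    then show False using nco g(1) by blast
  qed
  have cyC: "is_cycle C" and rbC: "rainbow C" and CF: "C \<subseteq> insert f F" and fC': "f \<in> C"
    using oc unfolding outer_cycle_def by blast+
  have cgC: "is_cgraph C" using cyC is_cycle_def by blast
  obtain xs where xs: "distinct xs" "length xs \<ge> 3" "uedges C = cedges xs" using cyC is_cycle_def by blast
  have "length xs = 3" using cycle_card[OF cyC xs(3) xs(1,2)] c3 by simp
  then obtain a b c where abc: "xs = [a,b,c]"
    by (auto simp: numeral_3_eq_3 length_Suc_conv)
  have "verts C = set xs" using Union_cedges[of xs] xs(2,3) verts_uedges by simp
  then have sabc: "{a,b,c} = {u,v,w}" using vC abc by simp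
  have "card (fst f) = 2" using cgC fC' is_cgraph_def by blast
  then have uv: "u \<noteq> v" using fuv by auto
  have "card {a,b,c} = 3" using xs(1) abc by simp
  then have c3': "card {u,v,w} = 3" using sabc by simp
  have uw: "u \<noteq> w"
  proof
    assume "u = w"
    then have "{u,v,w} = {u,v}" by auto
    then show False using c3' uv by simp
  qed
  have vw: "v \<noteq> w"
  proof
    assume "v = w"
    then have "{u,v,w} = {u,v}" by auto
    then show False using c3' uv by simp
  qed
  have d3: "distinct [a,b,c]" using xs(1) abc by simp
  have "{u,w} \<in> uedges C" using xs(3) abc pairs3[OF d3, of u w] sabc uw by auto
  then obtain e1 where e1C: "e1 \<in> C" "fst e1 = {u,w}" by (rule uedges_E)
  have "{w,v} \<in> uedges C" using xs(3) abc pairs3[OF d3, of w v] sabc vw by auto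
  then obtain e2 where e2C: "e2 \<in> C" "fst e2 = {w,v}" by (rule uedges_E)
  have e1f: "e1 \<noteq> f" using e1C fuv uv vw by (auto simp: doubleton_eq_iff)
  have e2f: "e2 \<noteq> f" using e2C fuv uv uw by (auto simp: doubleton_eq_iff)
  have e12: "e1 \<noteq> e2" using e1C e2C uv by (auto simp: doubleton_eq_iff)
  have e1F: "e1 \<in> F" using e1C e1f CF by blast
  have e2F: "e2 \<in> F" using e2C e2f CF by blast
  have injC: "inj_on snd C" using rbC rainbow_inj cgC cgraph_finite by blast
  have c12: "snd e1 \<noteq> snd e2" using injC e1C e2C e12 unfolding inj_on_def by blast
  define G where "G = insert f F"
  have cgG: "is_cgraph G"
  proof -
    have fin: "finite G" using cgF is_cgraph_def G_def by simp
    have c2: "\<forall>x\<in>G. card (fst x) = 2" using cgF \<open>card (fst f) = 2\<close> unfolding G_def is_cgraph_def by auto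
    have inj: "\<forall>x\<in>G. \<forall>y\<in>G. fst x = fst y \<longrightarrow> x = y"
    proof (intro ballI impI)
      fix x y assume xy: "x \<in> G" "y \<in> G" "fst x = fst y"
      show "x = y"
      proof (cases "x = f \<or> y = f")
        case True
        then show ?thesis using xy uvF fuv in_uedges unfolding G_def by (metis insertE)
      next
        case False
        then have "x \<in> F" "y \<in> F" using xy unfolding G_def by auto
        then show ?thesis using cgraph_same[OF cgF] xy(3) by blast
      qed
    qed
    show ?thesis unfolding is_cgraph_def using fin c2 inj by blast
  qed
  have GU: "G \<subseteq> union_D m D" using FU fU G_def by blast
  have ok: "okG G" unfolding okG_def
  proof (intro conjI allI impI)
    show "is_cgraph G" by (rule cgG)
    fix H assume HG: "H \<subseteq> G"
    show "\<not> rainbow_even_cycle H"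
    proof
      assume r: "rainbow_even_cycle H"
      then have "is_cgraph H" unfolding rainbow_even_cycle_def is_cycle_def by blast
      then show False using st3 HG GU r by blast
    qed
  qed
  have fG: "f \<in> G" unfolding G_def by simp
  have fvu: "fst f = {v,u}" using fuv by (simp add: insert_commute)
  define ps where "ps = Cs @ Bs @ Ts"
  have Pp: "is_partition F ps" using P ps_def by simp
  obtain X where X: "X \<in> set ps" "e1 \<in> X" using in_parts[OF Pp e1F] by blast
  obtain Y where Y: "Y \<in> set ps" "e2 \<in> Y" using in_parts[OF Pp e2F] by blast
  have XF: "X \<subseteq> F" and YF: "Y \<subseteq> F" using parts_sub[OF Pp] X Y by auto
  have XG: "X \<subseteq> G" and YG: "Y \<subseteq> G" using XF YF G_def by auto
  have wX: "w \<in> verts X" "u \<in> verts X" using in_verts[OF X(2)] e1C(2) by auto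
  have wY: "w \<in> verts Y" "v \<in> verts Y" using in_verts[OF Y(2)] e2C(2) by auto
  have nt: "long_rainbow_odd_cycle Z \<or> bad_piece Z" if "Z \<in> set Cs \<or> Z \<in> set Bs" for Z
    using that fC fB by blast
  have sfX: "snd f \<notin> colors X" using sf colors_mono[OF XF] by blast
  have sfY: "snd f \<notin> colors Y" using sf colors_mono[OF YF] by blast
  have uvX: "{u,v} \<notin> uedges X" using uvF uedges_mono[OF XF] by blast
  have uvY: "{u,v} \<notin> uedges Y" using uvF uedges_mono[OF YF] by blast
  have s2f: "snd e2 \<noteq> snd f" using in_colors[OF e2F] sf by metis
  have s1f: "snd e1 \<noteq> snd f" using in_colors[OF e1F] sf by metis
  have XY_diff: "v \<notin> verts X \<and> snd e2 \<notin> colors X \<and> u \<notin> verts Y \<and> snd e1 \<notin> colors Y" if "X \<noteq> Y"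
  proof -
    have c: "card (verts X \<inter> verts Y) \<le> 1" and cc: "colors X \<inter> colors Y = {}"
      using parts_set[OF Pp X(1) Y(1) that] by auto
    have fin: "finite (verts X \<inter> verts Y)" using cgraph_verts_finite[OF cgraph_subset[OF cgF XF]] by simp
    have "v \<notin> verts X"
    proof
      assume "v \<in> verts X"
      then have "{v,w} \<subseteq> verts X \<inter> verts Y" using wX wY by blast
      then have "card {v,w} \<le> 1" using c card_mono[OF fin] le_trans by blast
      then show False using vw by simp
    qed
    moreover have "u \<notin> verts Y"
    proof
      assume "u \<in> verts Y"
      then have "{u,w} \<subseteq> verts X \<inter> verts Y" using wX wY by blast
      then have "card {u,w} \<le> 1" using c card_mono[OF fin] le_trans by blast
      then show False using uw by simp
    qed
    moreover have "snd e2 \<notin> colors X" "snd e1 \<notin> colors Y" using cc in_colors[OF X(2)] in_colors[OF Y(2)] by blast+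
    ultimately show ?thesis by blast
  qed
  have noX: False if "X \<in> set Cs \<or> X \<in> set Bs"
  proof (cases "X = Y")
    case True
    then have "e2 \<in> X" using Y by simp
    then show False using NT_two[OF ok XG nt[OF that] X(2) e1C(2) _ e2C(2) fG fuv sfX uvX uv uw vw c12] by blast
  next
    case False
    note D = XY_diff[OF False]
    show False using NT_one[OF ok XG nt[OF that] X(2) e1C(2) _ _ e2C(2) fG fvu s2f _ sfX] D e2F G_def by blast
  qed
  have noY: False if "Y \<in> set Cs \<or> Y \<in> set Bs"
  proof (cases "X = Y")
    case True
    then have "e1 \<in> Y" using X by simp
    then show False using NT_two[OF ok YG nt[OF that] _ e1C(2) Y(2) e2C(2) fG fuv sfY uvY uv uw vw c12] by blast
  next
    case False
    note D = XY_diff[OF False]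
    have f2: "fst e2 = {v,w}" using e2C(2) by (simp add: insert_commute)
    have f1: "fst e1 = {w,u}" using e1C(2) by (simp add: insert_commute)
    show False using NT_one[OF ok YG nt[OF that] Y(2) f2 _ _ f1 _ fuv s1f _ sfY] D e1F G_def fG
      by (metis (no_types, lifting) insert_iff subsetD)
  qed
  have XT: "X \<in> set Ts" using X(1) noX unfolding ps_def by auto
  have YT: "Y \<in> set Ts" using Y(1) noY unfolding ps_def by auto
  have XYe: "X = Y"
  proof (rule ccontr)
    assume "X \<noteq> Y"
    then have "verts X \<inter> verts Y = {}" using trees_disj[OF fD XT YT] by blast
    then show False using wX wY by blast
  qed
  obtain k where k: "k < length Ts" "Ts ! k = X" using XT in_set_conv_nth by metis
  define T where "T = Ts ! k"
  have tT: "is_tree T" using fT XT k T_def by auto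
  have e1T: "e1 \<in> Ts ! k" and e2T: "e2 \<in> Ts ! k" using X(2) Y(2) XYe k by auto
  have ueT: "{u,w} \<in> uedges T" "{w,v} \<in> uedges T" using in_uedges e1T e2T e1C e2C T_def by metis+
  have du: "depth T u = depth T w + 1"
  proof -
    have "depth T u = depth T w + 1 \<or> depth T w = depth T u + 1" using neighbor_depth[OF tT ueT(1) uw] .
    moreover have "depth T u + 1 \<noteq> depth T w"
    proof
      assume "depth T u + 1 = depth T w"
      then show False using TL[OF st ex k(1) e1T e1C(2) e2T e2C(2) fU fuv sf uvF uv uw vw] T_def by simp
    qed
    ultimately show ?thesis by auto
  qed
  have dv: "depth T v = depth T w + 1"
  proof -
    have "{v,w} \<in> uedges T" using ueT(2) by (simp add: insert_commute)
    have "depth T v = depth T w + 1 \<or> depth T w = depth T v + 1" using neighbor_depth[OF tT \<open>{v,w} \<in> uedges T\<close> vw] .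
    moreover have "depth T v + 1 \<noteq> depth T w"
    proof
      assume a: "depth T v + 1 = depth T w"
      have f2: "fst e2 = {v,w}" using e2C(2) by (simp add: insert_commute)
      have f1: "fst e1 = {w,u}" using e1C(2) by (simp add: insert_commute)
      have "{v,u} \<notin> uedges F" using uvF by (simp add: insert_commute)
      then show False using TL[OF st ex k(1) e2T f2 e1T f1 fU fvu sf _ uv[symmetric] vw uw] a T_def by simp
    qed
    ultimately show ?thesis by auto
  qed
  have vs: "u \<in> verts T" "v \<in> verts T" "w \<in> verts T" using in_verts e1T e2T e1C e2C T_def by auto
  have "u \<in> child T w" unfolding child_def using vs ueT du by (simp add: insert_commute)
  moreover have "v \<in> child T w" unfolding child_def using vs ueT dv by simp
  ultimately show ?thesis using k(1) vs T_def by blast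
qed


end
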